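(* Let $M\in\mathrm{M}_n(\mathbb{K})$ be a cyclic matrix with minimal polynomial $f=f_1^{m_1}\cdots f_s^{m_s}$, where $f_1,\dots,f_s\in\mathbb{K}[x]$ are pairwise distinct monic irreducible polynomials and $m_i\ge1$. Let $\mathcal{C}\subseteq\mathbb{L}^n$ be an $M$-cyclic code of dimension $k$ with generator polynomial $g=g_1\cdots g_s$, $g_i\mid f_i^{m_i}$ in $\mathbb{L}[x]$. Define $\ell_i=0$ if $g_i=1$ and $\ell_i=\min\{\ell\in\{1,\dots,m_i\}:g_i\mid f_i^{\ell}\}$ otherwise; and $\ell'_i=0$ if $g_i=f_i^{m_i}$ and $\ell'_i=\min\{\ell'\in\{1,\dots,m_i\}: f_i^{m_i-\ell'}\mid g_i\}$ otherwise. Then, if $k\ge1$, $$M_k(\mathcal{C})=\sum_{i=1}^s\ell'_i\deg f_i=\sum_{1\le i\le s,\ g_i\neq f_i^{m_i}}\ell'_i\deg f_i,$$ and, if $k\le n-1$, $$M_{n-k}(\mathcal{C}^\perp)=\sum_{i=1}^s\ell_i\deg f_i=\sum_{1\le i\le s,\ \gcd(g,f_i)\neq1}\ell_i\deg f_i.$$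
   Context: Let $\mathbb{L}/\mathbb{K}$ be a field extension of finite degree $m\ge n$. Vectors are row vectors; $\mathcal{C}^\perp=\{c'\in\mathbb{L}^n:\sum_jc'_jc_j=0\ \forall c\in\mathcal{C}\}$. For $c=(c_1,\dots,c_n)\in\mathbb{L}^n$, $\mathrm{Rsupp}(c)\subseteq\mathbb{K}^n$ is the $\mathbb{K}$-row space of the $m\times n$ matrix over $\mathbb{K}$ whose $j$-th column is the coordinate vector of $c_j$ in a fixed $\mathbb{K}$-basis of $\mathbb{L}$; for an $\mathbb{L}$-subspace $\mathcal{D}$, $\mathrm{wt}_R(\mathcal{D})$ is the $\mathbb{K}$-dimension of the span of all $\mathrm{Rsupp}(d)$, $d\in\mathcal{D}$. For a $k$-dimensional $\mathbb{L}$-subspace $\mathcal{C}$ and $1\le r\le k$, $M_r(\mathcal{C})=\min\{\mathrm{wt}_R(\mathcal{D}):\mathcal{D}\subseteq\mathcal{C},\dim_{\mathbb{L}}\mathcal{D}=r\}$. A matrix $M\in\mathrm{M}_n(\mathbb{K})$ is cyclic if there is $v\in\mathbb{K}^n$ (a cyclic vector) with $(v,vM^t,\dots,v(M^t)^{n-1})$ a basis; equivalently its minimal polynomial $f$ has degree $n$. An $M$-cyclic code is an $\mathbb{L}$-subspace $\mathcal{C}\subseteq\mathbb{L}^n$ with $cM^t\in\mathcal{C}$ for all $c\in\mathcal{C}$; each equals $\mathcal{C}_g=\{v\,g(M)^tP(M)^t:P\in\mathbb{L}[x]\}$ for a unique monic divisor $g$ of $f$ in $\mathbb{L}[x]$ (its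 generator polynomial), and $\dim\mathcal{C}_g=n-\deg g$. *)

theory Defs
  imports "HOL-Analysis.Analysis" "HOL-Computational_Algebra.Polynomial"
    "HOL-Computational_Algebra.Polynomial_Factorial" "HOL-Computational_Algebra.Euclidean_Algorithm"
begin

text \<open>The field K is a type 'k, the field L is a type 'l, and the extension
  L/K is given by a field embedding emb of K into L.\<close>

definition field_emb :: "('k::field \<Rightarrow> 'l::field) \<Rightarrow> bool" where
  "field_emb emb \<longleftrightarrow> emb 1 = 1 \<and> (\<forall>a b. emb (a + b) = emb a + emb b)
     \<and> (\<forall>a b. emb (a * b) = emb a * emb b)"

definition is_K_basis :: "('k::field \<Rightarrow> 'l::field) \<Rightarrow> (nat \<Rightarrow> 'l) \<Rightarrow> nat \<Rightarrow> bool" where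
  "is_K_basis emb b m \<longleftrightarrow>
     (\<forall>x. \<exists>!a. (\<forall>t\<ge>m. a t = 0) \<and> x = (\<Sum>t<m. emb (a t) * b t))"

definition coords :: "('k::field \<Rightarrow> 'l::field) \<Rightarrow> (nat \<Rightarrow> 'l) \<Rightarrow> nat \<Rightarrow> 'l \<Rightarrow> nat \<Rightarrow> 'k" where
  "coords emb b m x = (THE a. (\<forall>t\<ge>m. a t = 0) \<and> x = (\<Sum>t<m. emb (a t) * b t))"

text \<open>Rsupp(c): the K-row space of the m x n matrix whose j-th column is the
  coordinate vector of c_j.\<close>
definition Rsupp :: "('k::field \<Rightarrow> 'l::field) \<Rightarrow> (nat \<Rightarrow> 'l) \<Rightarrow> nat \<Rightarrow> 'l^'n \<Rightarrow> ('k^'n) set" where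
  "Rsupp emb b m c = vec.span {(\<chi> j. coords emb b m (c $ j) t) | t. t < m}"

definition wtR :: "('k::field \<Rightarrow> 'l::field) \<Rightarrow> (nat \<Rightarrow> 'l) \<Rightarrow> nat \<Rightarrow> ('l^'n) set \<Rightarrow> nat" where
  "wtR emb b m D = vec.dim (vec.span (\<Union>d\<in>D. Rsupp emb b m d))"

definition Mr :: "('k::field \<Rightarrow> 'l::field) \<Rightarrow> (nat \<Rightarrow> 'l) \<Rightarrow> nat \<Rightarrow> nat \<Rightarrow> ('l^'n) set \<Rightarrow> nat" where
  "Mr emb b m r C = (INF D \<in> {D. vec.subspace D \<and> D \<subseteq> C \<and> vec.dim D = r}. wtR emb b m D)"

definition dual_code :: "('l::field^'n) set \<Rightarrow> ('l^'n) set" where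
  "dual_code C = {c'. \<forall>c\<in>C. (\<Sum>j\<in>UNIV. c' $ j * c $ j) = 0}"

definition matpow :: "'a::comm_ring_1^'n^'n \<Rightarrow> nat \<Rightarrow> 'a^'n^'n" where
  "matpow A i = (((**) A) ^^ i) (mat 1)"

definition poly_mat :: "'a::comm_ring_1 poly \<Rightarrow> 'a^'n^'n \<Rightarrow> 'a^'n^'n" where
  "poly_mat p A = (\<Sum>i\<le>degree p. (\<chi> r s. coeff p i * matpow A i $ r $ s))"

definition map_mat :: "('k \<Rightarrow> 'l) \<Rightarrow> 'k^'n^'n \<Rightarrow> 'l^'n^'n" where
  "map_mat h A = (\<chi> r s. h (A $ r $ s))"

definition map_vec :: "('k \<Rightarrow> 'l) \<Rightarrow> 'k^'n \<Rightarrow> 'l^'n" where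
  "map_vec h v = (\<chi> j. h (v $ j))"

text \<open>Row vector v times (M^t)^i is the column vector M^i v.  v is a cyclic
  vector iff (v, vM^t, ..., v(M^t)^(n-1)) is a basis of K^n.\<close>
definition cyclic_vector :: "'k::field^'n^'n \<Rightarrow> 'k^'n \<Rightarrow> bool" where
  "cyclic_vector M v \<longleftrightarrow>
     inj_on (\<lambda>i. matpow M i *v v) {..<CARD('n)}
     \<and> vec.independent ((\<lambda>i. matpow M i *v v) ` {..<CARD('n)})
     \<and> vec.span ((\<lambda>i. matpow M i *v v) ` {..<CARD('n)}) = UNIV"

definition cyclic_matrix :: "'k::field^'n^'n \<Rightarrow> bool" where
  "cyclic_matrix M \<longleftrightarrow> (\<exists>v. cyclic_vector M v)"

definition is_min_poly :: "'k::field^'n^'n \<Rightarrow> 'k poly \<Rightarrow> bool" where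
  "is_min_poly M f \<longleftrightarrow> lead_coeff f = 1 \<and> poly_mat f M = 0 \<and>
     (\<forall>p. p \<noteq> 0 \<and> poly_mat p M = 0 \<longrightarrow> degree f \<le> degree p)"

definition M_cyclic_code :: "('k::field \<Rightarrow> 'l::field) \<Rightarrow> 'k^'n^'n \<Rightarrow> ('l^'n) set \<Rightarrow> bool" where
  "M_cyclic_code emb M C \<longleftrightarrow> vec.subspace C \<and> (\<forall>c\<in>C. map_mat emb M *v c \<in> C)"

definition code_of_gen :: "('k::field \<Rightarrow> 'l::field) \<Rightarrow> 'k^'n^'n \<Rightarrow> 'k^'n \<Rightarrow> 'l poly \<Rightarrow> ('l^'n) set" where
  "code_of_gen emb M v g =
     {poly_mat P (map_mat emb M) *v (poly_mat g (map_mat emb M) *v map_vec emb v) | P. True}"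

end

theory Submission
  imports Defs
begin

lemma rank_nullity_mat:
  fixes Q :: "'a::field^'n^'m"
  shows "vec.dim {x. Q *v x = 0} + vec.dim (range ((*v) Q)) = CARD('n)"
proof -
  obtain K0 where K0: "K0 \<subseteq> {x. Q *v x = 0}" "vec.independent K0"
      "{x. Q *v x = 0} \<subseteq> vec.span K0" "card K0 = vec.dim {x. Q *v x = 0}"
    using vec.basis_exists[of "{x. Q *v x = 0}"] by blast
  obtain B where B: "K0 \<subseteq> B" "vec.independent B" "UNIV \<subseteq> vec.span B"
    by (rule vec.maximal_independent_subset_extend[of K0 UNIV, OF _ K0(2)]) auto
  have finB: "finite B" using B(2) vec.finiteI_independent by blast
  have cardB: "card B = CARD('n)"
    using vec.basis_card_eq_dim[of B UNIV] B vec_dim_card by auto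
  define R where "R = B - K0"
  have indR: "vec.independent R" using B(2) vec.independent_mono R_def by blast
  have finK: "finite K0" "finite R" using finB B(1) R_def finite_subset by auto
  have cards: "card K0 + card R = CARD('n)"
  proof -
    have "card R = card B - card K0" unfolding R_def using finK(1) B(1) by (simp add: card_Diff_subset)
    moreover have "card K0 \<le> card B" using finB B(1) by (simp add: card_mono)
    ultimately show ?thesis using cardB by simp
  qed
  have sp: "vec.span K0 \<inter> vec.span R \<subseteq> {0}"
  proof -
    have e0: "vec.dim {x + y |x y. x \<in> vec.span K0 \<and> y \<in> vec.span R} + vec.dim (vec.span K0 \<inter> vec.span R)
       = vec.dim (vec.span K0) + vec.dim (vec.span R)"
      by (rule vec.dim_sums_Int) auto
    have "K0 \<union> R = B" using B(1) R_def by blast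
    then have e1: "{x + y |x y. x \<in> vec.span K0 \<and> y \<in> vec.span R} = UNIV"
      using vec.span_Un[of K0 R] B(3) by auto
    have e2: "vec.dim (vec.span K0) = card K0" by (rule vec.dim_span_eq_card_independent[OF K0(2)])
    have e3: "vec.dim (vec.span R) = card R" by (rule vec.dim_span_eq_card_independent[OF indR])
    have e4: "vec.dim (UNIV :: ('a^'n) set) = CARD('n)" by (rule vec_dim_card)
    have "vec.dim (vec.span K0 \<inter> vec.span R) = 0"
      using e0 unfolding e1 e2 e3 e4 using cards by linarith
    then show ?thesis by simp
  qed
  have inj: "inj_on ((*v) Q) (vec.span R)"
  proof (subst vec.inj_on_iff_eq_0)
    show "vec.subspace (vec.span R)" by simp
    show "\<forall>x\<in>vec.span R. Q *v x = 0 \<longrightarrow> x = 0"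
      using sp K0(3) by blast
  qed
  have "range ((*v) Q) = (*v) Q ` vec.span B" using B(3) by auto
  also have "\<dots> = vec.span ((*v) Q ` B)" by (simp add: vec.span_image)
  also have "\<dots> = vec.span ((*v) Q ` R)"
  proof -
    have "(*v) Q ` B \<subseteq> insert 0 ((*v) Q ` R)" using K0(1) B(1) R_def by auto
    then have "vec.span ((*v) Q ` B) \<subseteq> vec.span ((*v) Q ` R)"
      by (metis vec.span_insert_0 vec.span_mono)
    moreover have "vec.span ((*v) Q ` R) \<subseteq> vec.span ((*v) Q ` B)"
      using R_def by (intro vec.span_mono) auto
    ultimately show ?thesis by blast
  qed
  finally have "vec.dim (range ((*v) Q)) = vec.dim ((*v) Q ` R)" by simp
  also have "\<dots> = vec.dim R" by (rule vec.dim_image_eq[OF _ inj]) simp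
  also have "\<dots> = card R" using indR vec.dim_eq_card_independent by blast
  finally show ?thesis using K0(4) cards by simp
qed


lemma row_eq: "row i A = A $ i"
  by (simp add: row_def vec_eq_iff)

lemma dim_range_le_rows:
  fixes Q :: "'a::field^'n^'m"
  shows "vec.dim (range ((*v) Q)) \<le> vec.dim (rows Q)"
proof -
  obtain R where R: "R \<subseteq> rows Q" "vec.independent R" "rows Q \<subseteq> vec.span R" "card R = vec.dim (rows Q)"
    using vec.basis_exists[of "rows Q"] by blast
  have finR: "finite R" using R(2) vec.finiteI_independent by blast
  have "\<forall>i. \<exists>u. Q $ i = (\<Sum>r\<in>R. u r *s r)"
  proof
    fix i
    have "Q $ i \<in> vec.span R" using R(3) unfolding rows_def row_eq by blast
    then show "\<exists>u. Q $ i = (\<Sum>r\<in>R. u r *s r)" unfolding vec.span_finite[OF finR] by blast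
  qed
  then obtain u where u: "\<And>i. Q $ i = (\<Sum>r\<in>R. u i r *s r)" by metis
  define col where "col r = (\<chi> i. u i r)" for r
  have "range ((*v) Q) \<subseteq> vec.span (col ` R)"
  proof
    fix y assume "y \<in> range ((*v) Q)"
    then obtain x where y: "y = Q *v x" by blast
    have "y = (\<Sum>r\<in>R. (\<Sum>j\<in>UNIV. r $ j * x $ j) *s col r)"
    proof (subst vec_eq_iff, intro allI)
      fix i
      have "y $ i = (\<Sum>j\<in>UNIV. Q $ i $ j * x $ j)" by (simp add: y matrix_vector_mult_def)
      also have "\<dots> = (\<Sum>j\<in>UNIV. (\<Sum>r\<in>R. u i r * r $ j) * x $ j)"
        by (subst u) (simp add: sum_component)
      also have "\<dots> = (\<Sum>r\<in>R. (\<Sum>j\<in>UNIV. r $ j * x $ j) * u i r)"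
        by (simp add: sum_distrib_right sum_distrib_left mult_ac sum.swap[of _ UNIV R])
      also have "\<dots> = (\<Sum>r\<in>R. (\<Sum>j\<in>UNIV. r $ j * x $ j) *s col r) $ i"
        by (simp add: sum_component col_def)
      finally show "y $ i = (\<Sum>r\<in>R. (\<Sum>j\<in>UNIV. r $ j * x $ j) *s col r) $ i" .
    qed
    then show "y \<in> vec.span (col ` R)"
      by (simp only:) (intro vec.span_sum vec.span_scale vec.span_base imageI)
  qed
  then have "vec.dim (range ((*v) Q)) \<le> card (col ` R)"
    using finR by (intro vec.dim_le_card) auto
  also have "\<dots> \<le> card R" using finR card_image_le by blast
  finally show ?thesis using R(4) by simp
qed

lemma range_transpose_span_rows:
  fixes Q :: "'a::field^'n^'m"
  shows "range ((*v) (transpose Q)) = vec.span (rows Q)"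
proof
  show "range ((*v) (transpose Q)) \<subseteq> vec.span (rows Q)"
  proof
    fix y assume "y \<in> range ((*v) (transpose Q))"
    then obtain x where y: "y = transpose Q *v x" by blast
    have "y = (\<Sum>i\<in>UNIV. x $ i *s row i Q)"
      by (simp add: y vec_eq_iff matrix_vector_mult_def transpose_def row_def sum_component mult_ac)
    then show "y \<in> vec.span (rows Q)"
      by (simp only:) (intro vec.span_sum vec.span_scale vec.span_base, auto simp: rows_def)
  qed
next
  have "rows Q \<subseteq> range ((*v) (transpose Q))"
  proof
    fix r assume "r \<in> rows Q"
    then obtain i where r: "r = row i Q" by (auto simp: rows_def)
    have "r = transpose Q *v axis i 1"
      by (simp add: r vec_eq_iff matrix_vector_mult_def transpose_def row_def axis_def
           if_distrib cong: if_cong)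
    then show "r \<in> range ((*v) (transpose Q))" by blast
  qed
  moreover have "vec.subspace (range ((*v) (transpose Q)))"
    using vec.subspace_image[OF vec.subspace_UNIV] by blast
  ultimately show "vec.span (rows Q) \<subseteq> range ((*v) (transpose Q))"
    by (rule vec.span_minimal)
qed

lemma columns_sub_range:
  fixes Q :: "'a::field^'n^'m"
  shows "columns Q \<subseteq> range ((*v) Q)"
proof
  fix c assume "c \<in> columns Q"
  then obtain j where c: "c = column j Q" by (auto simp: columns_def)
  have "c = Q *v axis j 1"
    by (simp add: c vec_eq_iff matrix_vector_mult_def column_def axis_def if_distrib cong: if_cong)
  then show "c \<in> range ((*v) Q)" by blast
qed

lemma dim_range_eq_rows:
  fixes Q :: "'a::field^'n^'m"
  shows "vec.dim (range ((*v) Q)) = vec.dim (rows Q)"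
proof -
  have "vec.dim (rows Q) = vec.dim (vec.span (rows Q))" by simp
  also have "\<dots> = vec.dim (range ((*v) (transpose Q)))"
    by (simp only: range_transpose_span_rows)
  also have "\<dots> \<le> vec.dim (rows (transpose Q))" by (rule dim_range_le_rows)
  also have "\<dots> = vec.dim (columns Q)" by simp
  also have "\<dots> \<le> vec.dim (range ((*v) Q))" by (rule vec.dim_subset[OF columns_sub_range])
  finally show ?thesis using dim_range_le_rows[of Q] by linarith
qed


lemma subspace_dual: "vec.subspace (dual_code V)"
  unfolding vec.subspace_def dual_code_def
  by (auto simp: sum.distrib algebra_simps sum_distrib_left[symmetric])

lemma dual_span_rows:
  fixes Q :: "'a::field^'n^'m"
  shows "dual_code (vec.span (rows Q)) = {x. Q *v x = 0}"
proof
  show "dual_code (vec.span (rows Q)) \<subseteq> {x. Q *v x = 0}"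
  proof
    fix x assume x: "x \<in> dual_code (vec.span (rows Q))"
    have "(Q *v x) $ i = 0" for i
    proof -
      have "row i Q \<in> vec.span (rows Q)" by (auto intro: vec.span_base simp: rows_def)
      then have "(\<Sum>j\<in>UNIV. x $ j * row i Q $ j) = 0" using x by (auto simp: dual_code_def)
      then show ?thesis by (simp add: matrix_vector_mult_def row_def mult_ac)
    qed
    then show "x \<in> {x. Q *v x = 0}" by (simp add: vec_eq_iff)
  qed
next
  show "{x. Q *v x = 0} \<subseteq> dual_code (vec.span (rows Q))"
  proof
    fix x assume x: "x \<in> {x. Q *v x = 0}"
    let ?S = "{c. (\<Sum>j\<in>UNIV. x $ j * c $ j) = 0}"
    have sub: "vec.subspace ?S"
      unfolding vec.subspace_def
      by (auto simp: sum.distrib algebra_simps sum_distrib_left[symmetric])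
    have "rows Q \<subseteq> ?S"
    proof
      fix r assume "r \<in> rows Q"
      then obtain i where r: "r = row i Q" by (auto simp: rows_def)
      have "(Q *v x) $ i = 0" using x by simp
      then show "r \<in> ?S" by (simp add: r matrix_vector_mult_def row_def mult_ac)
    qed
    then have "vec.span (rows Q) \<subseteq> ?S" using sub by (rule vec.span_minimal)
    then show "x \<in> dual_code (vec.span (rows Q))" by (auto simp: dual_code_def)
  qed
qed

lemma exists_rows_span:
  fixes V :: "('a::field^'n) set"
  assumes "vec.subspace V"
  shows "\<exists>Q::'a^'n^'n. vec.span (rows Q) = V"
proof -
  obtain B where B: "B \<subseteq> V" "vec.independent B" "V \<subseteq> vec.span B" "card B = vec.dim V"
    using vec.basis_exists[of V] by blast
  have finB: "finite B" using B(2) vec.finiteI_independent by blast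
  have "card B \<le> card (UNIV::'n set)" using B(4) dim_subset_UNIV_cart_gen[of V] by simp
  then obtain \<iota> :: "'a^'n \<Rightarrow> 'n" where \<iota>: "inj_on \<iota> B"
    using card_le_inj[OF finB, of "UNIV::'n set"] by auto
  define Q :: "'a^'n^'n" where "Q = (\<chi> i. if i \<in> \<iota> ` B then inv_into B \<iota> i else 0)"
  have "rows Q \<subseteq> insert 0 B"
    by (auto simp: rows_def row_eq Q_def inv_into_into)
  moreover have "B \<subseteq> rows Q"
  proof
    fix b assume b: "b \<in> B"
    then have "row (\<iota> b) Q = b" using \<iota> by (simp add: row_eq Q_def)
    then show "b \<in> rows Q" unfolding rows_def by (metis (mono_tags, lifting) UNIV_I mem_Collect_eq)
  qed
  ultimately have "vec.span (rows Q) = vec.span B"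
    by (metis (no_types, lifting) vec.span_insert_0 vec.span_mono subset_antisym)
  also have "\<dots> = V" using B assms vec.span_subspace by blast
  finally show ?thesis by blast
qed

lemma dim_dual:
  fixes V :: "('a::field^'n) set"
  assumes "vec.subspace V"
  shows "vec.dim (dual_code V) = CARD('n) - vec.dim V"
proof -
  obtain Q :: "'a^'n^'n" where Q: "vec.span (rows Q) = V" using exists_rows_span[OF assms] by blast
  have "dual_code V = {x. Q *v x = 0}" using dual_span_rows[of Q] Q by simp
  moreover have "vec.dim (range ((*v) Q)) = vec.dim V"
    using dim_range_eq_rows[of Q] Q vec.dim_span[of "rows Q"] by simp
  ultimately show ?thesis using rank_nullity_mat[of Q] by simp
qed

lemma dual_dual:
  fixes V :: "('a::field^'n) set"
  assumes "vec.subspace V"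
  shows "dual_code (dual_code V) = V"
proof -
  have sub: "V \<subseteq> dual_code (dual_code V)"
    by (auto simp: dual_code_def mult.commute)
  have "vec.dim V \<le> CARD('n)" by (rule dim_subset_UNIV_cart_gen)
  then have "vec.dim (dual_code (dual_code V)) = vec.dim V"
    using dim_dual[OF assms] dim_dual[OF subspace_dual, of V] by simp
  then show ?thesis
    using vec.subspace_dim_equal[OF assms subspace_dual sub] by simp
qed

lemma matpow_0[simp]: "matpow A 0 = mat 1"
  by (simp add: matpow_def)

lemma matpow_Suc: "matpow A (Suc i) = A ** matpow A i"
  by (simp add: matpow_def)

lemma sum_mat_vec: "(sum f S) *v x = (\<Sum>i\<in>S. f i *v x)"
  by (induction S rule: infinite_finite_induct) (auto simp: matrix_vector_mult_add_rdistrib)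

lemma mat_sum_vec: "(A::'a::field^'n^'m) *v (sum f S) = (\<Sum>i\<in>S. A *v f i)"
  by (induction S rule: infinite_finite_induct) (auto simp: matrix_vector_right_distrib)

lemma smat_vec: "(\<chi> r s. c * (X::'a::field^'n^'m) $ r $ s) *v x = c *s (X *v x)"
  by (simp add: vec_eq_iff matrix_vector_mult_def sum_distrib_left mult_ac)

lemma poly_mat_vec_le:
  fixes A :: "'a::field^'n^'n"
  assumes "degree p \<le> N"
  shows "poly_mat p A *v x = (\<Sum>i\<le>N. coeff p i *s (matpow A i *v x))"
proof -
  have "poly_mat p A *v x = (\<Sum>i\<le>degree p. coeff p i *s (matpow A i *v x))"
    by (simp add: poly_mat_def sum_mat_vec smat_vec)
  also have "\<dots> = (\<Sum>i\<le>N. coeff p i *s (matpow A i *v x))"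
    by (rule sum.mono_neutral_left) (use assms in \<open>auto simp: coeff_eq_0\<close>)
  finally show ?thesis .
qed

lemma poly_mat_vec_pCons:
  fixes A :: "'a::field^'n^'n"
  shows "poly_mat (pCons a p) A *v x = a *s x + A *v (poly_mat p A *v x)"
proof -
  have "poly_mat (pCons a p) A *v x = (\<Sum>i\<le>Suc (degree p). coeff (pCons a p) i *s (matpow A i *v x))"
    by (rule poly_mat_vec_le) (simp add: degree_pCons_le)
  also have "\<dots> = a *s x + (\<Sum>i\<le>degree p. coeff p i *s (matpow A (Suc i) *v x))"
    by (subst sum.atMost_Suc_shift) simp
  also have "(\<Sum>i\<le>degree p. coeff p i *s (matpow A (Suc i) *v x)) = A *v (poly_mat p A *v x)"
    by (simp add: poly_mat_vec_le[of p "degree p"] mat_sum_vec vector_scalar_commute matpow_Suc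
         matrix_vector_mul_assoc)
  finally show ?thesis .
qed

lemma poly_mat_vec_0[simp]: "poly_mat 0 (A::'a::field^'n^'n) *v x = 0"
  by (simp add: poly_mat_vec_le[of 0 0])

lemma poly_mat_vec_add:
  fixes A :: "'a::field^'n^'n"
  shows "poly_mat (p + q) A *v x = poly_mat p A *v x + poly_mat q A *v x"
proof -
  let ?N = "max (degree p) (degree q)"
  have "poly_mat (p + q) A *v x = (\<Sum>i\<le>?N. coeff (p + q) i *s (matpow A i *v x))"
    by (rule poly_mat_vec_le) (simp add: degree_add_le)
  also have "\<dots> = (\<Sum>i\<le>?N. coeff p i *s (matpow A i *v x)) + (\<Sum>i\<le>?N. coeff q i *s (matpow A i *v x))"
    by (simp add: sum.distrib vector_sadd_rdistrib)
  also have "\<dots> = poly_mat p A *v x + poly_mat q A *v x"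
    by (simp add: poly_mat_vec_le[of p ?N] poly_mat_vec_le[of q ?N])
  finally show ?thesis .
qed

lemma poly_mat_vec_smult:
  fixes A :: "'a::field^'n^'n"
  shows "poly_mat (smult c p) A *v x = c *s (poly_mat p A *v x)"
proof -
  have "poly_mat (smult c p) A *v x = (\<Sum>i\<le>degree p. coeff (smult c p) i *s (matpow A i *v x))"
    by (rule poly_mat_vec_le) (simp add: degree_smult_le)
  also have "\<dots> = c *s (poly_mat p A *v x)"
    by (simp add: poly_mat_vec_le[of p "degree p"] vec.scale_sum_right)
  finally show ?thesis .
qed

lemma poly_mat_vec_minus:
  fixes A :: "'a::field^'n^'n"
  shows "poly_mat (- p) A *v x = - (poly_mat p A *v x)"
  using poly_mat_vec_smult[of "-1" p A x] by simp

lemma poly_mat_vec_diff: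
  fixes A :: "'a::field^'n^'n"
  shows "poly_mat (p - q) A *v x = poly_mat p A *v x - poly_mat q A *v x"
  using poly_mat_vec_add[of p "-q" A x] poly_mat_vec_minus[of q A x] by simp

lemma poly_mat_vec_const: "poly_mat [:c:] (A::'a::field^'n^'n) *v x = c *s x"
  using poly_mat_vec_pCons[of c 0 A x] by simp

lemma poly_mat_vec_1: "poly_mat 1 (A::'a::field^'n^'n) *v x = x"
  using poly_mat_vec_const[of 1 A x] by (simp add: one_pCons)

lemma poly_mat_vec_mult:
  fixes A :: "'a::field^'n^'n"
  shows "poly_mat (p * q) A *v x = poly_mat p A *v (poly_mat q A *v x)"
proof (induction p rule: pCons_induct)
  case 0
  then show ?case by simp
next
  case (pCons a p)
  have "poly_mat (pCons a p * q) A *v x = poly_mat (smult a q + pCons 0 (p * q)) A *v x" by simp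
  also have "\<dots> = a *s (poly_mat q A *v x) + A *v (poly_mat (p * q) A *v x)"
    by (simp only: poly_mat_vec_add poly_mat_vec_smult poly_mat_vec_pCons) simp
  also have "\<dots> = poly_mat (pCons a p) A *v (poly_mat q A *v x)"
    by (simp only: poly_mat_vec_pCons pCons.IH)
  finally show ?case .
qed

lemma poly_mat_vec_commute:
  fixes A :: "'a::field^'n^'n"
  shows "poly_mat p A *v (A *v x) = A *v (poly_mat p A *v x)"
proof (induction p rule: pCons_induct)
  case (pCons a p)
  then show ?case
    by (simp add: poly_mat_vec_pCons matrix_vector_right_distrib vector_scalar_commute)
qed simp

lemma poly_mat_vec_commute2:
  fixes A :: "'a::field^'n^'n"
  shows "poly_mat p A *v (poly_mat q A *v x) = poly_mat q A *v (poly_mat p A *v x)"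
  by (metis poly_mat_vec_mult mult.commute)

lemma poly_mat_vec_monom:
  fixes A :: "'a::field^'n^'n"
  shows "poly_mat (monom c i) A *v x = c *s (matpow A i *v x)"
proof -
  have "poly_mat (monom c i) A *v x = (\<Sum>j\<le>i. coeff (monom c i) j *s (matpow A j *v x))"
    by (rule poly_mat_vec_le) (simp add: degree_monom_le)
  also have "\<dots> = c *s (matpow A i *v x)"
    by (subst sum.remove[of _ i]) (auto simp: coeff_monom)
  finally show ?thesis .
qed

lemma poly_mat_vec_span:
  fixes A :: "'a::field^'n^'n"
  assumes "degree p < N"
  shows "poly_mat p A *v x \<in> vec.span ((\<lambda>i. matpow A i *v x) ` {..<N})"
proof -
  have "poly_mat p A *v x = (\<Sum>i\<le>degree p. coeff p i *s (matpow A i *v x))"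
    by (rule poly_mat_vec_le) simp
  also have "\<dots> \<in> vec.span ((\<lambda>i. matpow A i *v x) ` {..<N})"
    using assms by (intro vec.span_sum vec.span_scale vec.span_base) auto
  finally show ?thesis .
qed

lemma poly_mat_vec_zero_iff:
  fixes A :: "'a::field^'n^'n"
  shows "poly_mat p A = 0 \<longleftrightarrow> (\<forall>x. poly_mat p A *v x = 0)"
  by (simp add: matrix_eq)

context
  fixes emb :: "'k::field \<Rightarrow> 'l::field"
  assumes emb: "field_emb emb"
begin

lemma emb_add: "emb (a + b) = emb a + emb b" using emb by (simp add: field_emb_def)
lemma emb_mult: "emb (a * b) = emb a * emb b" using emb by (simp add: field_emb_def)
lemma emb_1: "emb 1 = 1" using emb by (simp add: field_emb_def)
lemma emb_0: "emb 0 = 0"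
proof -
  have "emb 0 + emb 0 = emb 0 + 0" using emb_add[of 0 0] by simp
  then show ?thesis by (rule add_left_imp_eq)
qed
lemma emb_uminus: "emb (- a) = - emb a"
proof -
  have "emb a + emb (- a) = 0" using emb_add[of a "-a"] emb_0 by simp
  then show ?thesis by (rule minus_unique[symmetric])
qed
lemma emb_diff: "emb (a - b) = emb a - emb b" using emb_add[of a "-b"] emb_uminus[of b] by simp
lemma emb_sum: "emb (sum f S) = (\<Sum>i\<in>S. emb (f i))"
  by (induction S rule: infinite_finite_induct) (auto simp: emb_0 emb_add)
lemma emb_eq_0: "emb a = 0 \<longleftrightarrow> a = 0"
proof
  assume "emb a = 0"
  show "a = 0"
  proof (rule ccontr)
    assume "a \<noteq> 0"
    then have "emb a * emb (inverse a) = 1" using emb_mult[of a "inverse a"] emb_1 by simp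
    with \<open>emb a = 0\<close> show False by simp
  qed
qed (simp add: emb_0)
lemma emb_inj: "emb a = emb b \<longleftrightarrow> a = b"
  using emb_eq_0[of "a - b"] emb_diff by auto

lemma coeff_map_emb[simp]: "coeff (map_poly emb p) i = emb (coeff p i)"
  by (simp add: coeff_map_poly emb_0)

lemma degree_map_emb[simp]: "degree (map_poly emb p) = degree p"
proof (cases "p = 0")
  case False
  then show ?thesis by (intro map_poly_degree_eq) (simp add: emb_eq_0)
qed simp

lemma map_emb_add: "map_poly emb (p + q) = map_poly emb p + map_poly emb q"
  by (rule poly_eqI) (simp add: emb_add)

lemma map_emb_uminus: "map_poly emb (- p) = - map_poly emb p"
  by (rule poly_eqI) (simp add: emb_uminus)

lemma map_emb_diff: "map_poly emb (p - q) = map_poly emb p - map_poly emb q"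
  by (rule poly_eqI) (simp add: emb_diff)

lemma map_emb_smult: "map_poly emb (smult c p) = smult (emb c) (map_poly emb p)"
  by (rule poly_eqI) (simp add: emb_mult)

lemma map_emb_pCons: "map_poly emb (pCons a p) = pCons (emb a) (map_poly emb p)"
  by (rule map_poly_pCons) (simp add: emb_0)

lemma map_emb_mult: "map_poly emb (p * q) = map_poly emb p * map_poly emb q"
proof (induction p rule: pCons_induct)
  case (pCons a p)
  then show ?case by (simp add: map_emb_add map_emb_smult map_emb_pCons emb_0)
qed simp

lemma map_emb_1: "map_poly emb 1 = 1" by (simp add: emb_1)

lemma map_emb_power: "map_poly emb (p ^ k) = map_poly emb p ^ k"
  by (induction k) (simp_all add: map_emb_1 map_emb_mult)

lemma map_emb_prod: "map_poly emb (prod f S) = (\<Prod>i\<in>S. map_poly emb (f i))"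
  by (induction S rule: infinite_finite_induct) (simp_all add: map_emb_1 map_emb_mult)

lemma map_emb_dvd: "p dvd q \<Longrightarrow> map_poly emb p dvd map_poly emb q"
  by (auto simp: dvd_def map_emb_mult)

lemma map_emb_lead: "lead_coeff (map_poly emb p) = emb (lead_coeff p)" by simp

lemma map_emb_coprime:
  fixes p q :: "'k poly"
  assumes "u * p + v * q = 1"
  shows "coprime (map_poly emb p) (map_poly emb q)"
proof -
  have "map_poly emb u * map_poly emb p + map_poly emb v * map_poly emb q = 1"
    using assms map_emb_1 by (metis map_emb_add map_emb_mult)
  then show ?thesis
    by (metis coprimeI dvd_add dvd_mult)
qed

lemma map_vec_add: "map_vec emb (x + y) = map_vec emb x + map_vec emb y"
  by (simp add: map_vec_def vec_eq_iff emb_add)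

lemma map_vec_scale: "map_vec emb (c *s x) = emb c *s map_vec emb x"
  by (simp add: map_vec_def vec_eq_iff emb_mult)

lemma map_vec_0: "map_vec emb 0 = 0"
  by (simp add: map_vec_def vec_eq_iff emb_0)

lemma map_vec_sum: "map_vec emb (sum f S) = (\<Sum>i\<in>S. map_vec emb (f i))"
  by (induction S rule: infinite_finite_induct) (auto simp: map_vec_0 map_vec_add)

lemma map_vec_inj: "map_vec emb x = map_vec emb y \<longleftrightarrow> x = y"
  by (auto simp: map_vec_def vec_eq_iff emb_inj)

lemma map_vec_eq_0: "map_vec emb x = 0 \<longleftrightarrow> x = 0"
  using map_vec_inj[of x 0] by (simp add: map_vec_0)

lemma map_mat_vec: "map_vec emb (X *v x) = map_mat emb X *v map_vec emb x"
  by (simp add: map_vec_def map_mat_def vec_eq_iff matrix_vector_mult_def emb_sum emb_mult)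

lemma map_mat_mult: "map_mat emb (X ** Y) = map_mat emb X ** map_mat emb Y"
  by (simp add: map_mat_def vec_eq_iff matrix_matrix_mult_def emb_sum emb_mult)

lemma map_mat_1: "map_mat emb (mat 1) = mat 1"
  by (simp add: map_mat_def vec_eq_iff mat_def emb_0 emb_1)

lemma map_matpow: "map_mat emb (matpow M i) = matpow (map_mat emb M) i"
  by (induction i) (simp_all add: map_mat_1 matpow_Suc map_mat_mult)

lemma map_poly_mat_vec:
  "map_vec emb (poly_mat p M *v x) = poly_mat (map_poly emb p) (map_mat emb M) *v map_vec emb x"
proof -
  have "map_vec emb (poly_mat p M *v x) = map_vec emb (\<Sum>i\<le>degree p. coeff p i *s (matpow M i *v x))"
    by (simp add: poly_mat_vec_le[of p "degree p"])
  also have "\<dots> = (\<Sum>i\<le>degree p. emb (coeff p i) *s (matpow (map_mat emb M) i *v map_vec emb x))"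
    by (simp add: map_vec_sum map_vec_scale map_mat_vec map_matpow)
  also have "\<dots> = poly_mat (map_poly emb p) (map_mat emb M) *v map_vec emb x"
    by (simp add: poly_mat_vec_le[of "map_poly emb p" "degree p"])
  finally show ?thesis .
qed

lemma map_poly_mat: "map_mat emb (poly_mat p M) = poly_mat (map_poly emb p) (map_mat emb M)"
  unfolding poly_mat_def map_mat_def using map_matpow[of M, symmetric]
  by (simp add: vec_eq_iff sum_component emb_sum emb_mult map_mat_def)

end

lemma poly_mat_vec_sum:
  fixes A :: "'a::field^'n^'n"
  shows "poly_mat (sum f S) A *v x = (\<Sum>i\<in>S. poly_mat (f i) A *v x)"
  by (induction S rule: infinite_finite_induct) (auto simp: poly_mat_vec_add)

definition codeE :: "'a::field^'n^'n \<Rightarrow> 'a^'n \<Rightarrow> 'a poly \<Rightarrow> ('a^'n) set" where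
  "codeE M v h = {poly_mat q M *v v | q. h dvd q}"

lemma atMost_pred_eq: "0 < (m::nat) \<Longrightarrow> {..m - 1} = {..<m}" by auto

locale cyc =
  fixes M :: "'a::field^'n^'n" and v :: "'a^'n"
  assumes cv: "cyclic_vector M v"
begin

abbreviation "\<phi> \<equiv> (\<lambda>i. matpow M i *v v)"

lemma inj_phi: "inj_on \<phi> {..<CARD('n)}" using cv by (simp add: cyclic_vector_def)
lemma ind_phi: "vec.independent (\<phi> ` {..<CARD('n)})" using cv by (simp add: cyclic_vector_def)
lemma span_phi: "vec.span (\<phi> ` {..<CARD('n)}) = UNIV" using cv by (simp add: cyclic_vector_def)

lemma surj_ev: "\<exists>q. degree q < CARD('n) \<and> x = poly_mat q M *v v"
proof -
  have "x \<in> vec.span (\<phi> ` {..<CARD('n)})" using span_phi by simp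
  then obtain u where u: "x = (\<Sum>y\<in>\<phi> ` {..<CARD('n)}. u y *s y)"
    unfolding vec.span_finite[OF finite_imageI[OF finite_lessThan]] by blast
  also have "\<dots> = (\<Sum>i<CARD('n). u (\<phi> i) *s \<phi> i)"
    by (rule sum.reindex[OF inj_phi, unfolded comp_def])
  finally have x: "x = (\<Sum>i<CARD('n). u (\<phi> i) *s \<phi> i)" .
  define q where "q = (\<Sum>i<CARD('n). monom (u (\<phi> i)) i)"
  have ev: "poly_mat q M *v v = x"
    by (simp add: q_def poly_mat_vec_sum poly_mat_vec_monom x)
  have dq: "degree q \<le> CARD('n) - 1"
    unfolding q_def by (rule degree_sum_le) (auto intro: order.trans[OF degree_monom_le])
  have cq: "CARD('n) - 1 < CARD('n)" by (rule diff_less) simp_all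
  have "degree q < CARD('n)" using dq cq by linarith
  then show ?thesis using ev by blast
qed

lemma ev_indep:
  assumes "degree r < CARD('n)" "poly_mat r M *v v = 0"
  shows "r = 0"
proof -
  have fin: "finite (\<phi> ` {..<CARD('n)})" by simp
  define c where "c y = coeff r (inv_into {..<CARD('n)} \<phi> y)" for y
  have "poly_mat r M *v v = (\<Sum>i\<le>CARD('n) - 1. coeff r i *s \<phi> i)"
    by (rule poly_mat_vec_le) (use assms(1) in linarith)
  also have "\<dots> = (\<Sum>i<CARD('n). coeff r i *s \<phi> i)"
  proof -
    have "{..CARD('n) - 1} = {..<CARD('n)}" by (rule atMost_pred_eq) simp
    then show ?thesis by simp
  qed
  also have "\<dots> = (\<Sum>i<CARD('n). c (\<phi> i) *s \<phi> i)"
    by (rule sum.cong) (auto simp: c_def inv_into_f_f[OF inj_phi])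
  also have "\<dots> = (\<Sum>y\<in>\<phi> ` {..<CARD('n)}. c y *s y)"
    by (rule sum.reindex[OF inj_phi, unfolded comp_def, symmetric])
  finally have "(\<Sum>y\<in>\<phi> ` {..<CARD('n)}. c y *s y) = 0" using assms(2) by simp
  then have c0: "\<forall>y\<in>\<phi> ` {..<CARD('n)}. c y = 0"
    using ind_phi unfolding vec.independent_explicit by blast
  have "coeff r i = 0" for i
  proof (cases "i < CARD('n)")
    case True
    then have "c (\<phi> i) = 0" using c0 by blast
    then show ?thesis by (simp add: c_def inv_into_f_f[OF inj_phi] True)
  next
    case False
    then show ?thesis using assms(1) by (intro coeff_eq_0) simp
  qed
  then show ?thesis by (simp add: poly_eq_iff)
qed

lemma ev_zero_all:
  assumes "poly_mat p M *v v = 0"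
  shows "poly_mat p M = 0"
proof -
  have "poly_mat p M *v x = 0" for x
  proof -
    obtain q where "x = poly_mat q M *v v" using surj_ev by blast
    then show ?thesis using assms by (simp add: poly_mat_vec_commute2[of p M q])
  qed
  then show ?thesis by (simp add: matrix_eq)
qed

lemma degree_min_poly:
  assumes "is_min_poly M f"
  shows "degree f = CARD('n)"
proof -
  have f0: "f \<noteq> 0" and fM: "poly_mat f M = 0"
    using assms by (auto simp: is_min_poly_def)
  have "\<not> degree f < CARD('n)"
  proof
    assume "degree f < CARD('n)"
    moreover have "poly_mat f M *v v = 0" using fM by simp
    ultimately show False using ev_indep f0 by blast
  qed
  moreover have "degree f \<le> CARD('n)"
  proof -
    obtain q where q: "degree q < CARD('n)" "poly_mat (monom 1 CARD('n)) M *v v = poly_mat q M *v v"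
      using surj_ev by blast
    define p where "p = monom 1 CARD('n) - q"
    have "poly_mat p M *v v = 0" by (simp add: p_def poly_mat_vec_diff q(2))
    then have pM: "poly_mat p M = 0" by (rule ev_zero_all)
    have "coeff p CARD('n) = 1" using q(1) by (simp add: p_def coeff_eq_0)
    then have p0: "p \<noteq> 0" by auto
    have "degree p \<le> CARD('n)"
      unfolding p_def using degree_diff_le_max[of "monom 1 (CARD('n))" q] q(1) degree_monom_le[of 1 "CARD('n)"]
      by (metis max.absorb1 max.absorb2 nat_le_linear order.strict_implies_order order.trans)
    moreover have "degree f \<le> degree p" using assms p0 pM by (auto simp: is_min_poly_def)
    ultimately show ?thesis by simp
  qed
  ultimately show ?thesis by simp
qed

context
  fixes f :: "'a poly"
  assumes fM: "poly_mat f M = 0" and degf: "degree f = CARD('n)"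
begin

lemma f_nz: "f \<noteq> 0"
proof
  assume "f = 0"
  then have "CARD('n) = 0" using degf by simp
  then show False by simp
qed

lemma ev_kernel: "poly_mat q M *v v = 0 \<longleftrightarrow> f dvd q"
proof
  assume "f dvd q"
  then obtain r where "q = f * r" by (auto simp: dvd_def)
  then show "poly_mat q M *v v = 0" by (simp add: poly_mat_vec_mult fM)
next
  assume q0: "poly_mat q M *v v = 0"
  have "q = (q div f) * f + q mod f" by simp
  then have "poly_mat q M *v v = poly_mat (q div f) M *v (poly_mat f M *v v) + poly_mat (q mod f) M *v v"
    by (metis poly_mat_vec_add poly_mat_vec_mult)
  then have r0: "poly_mat (q mod f) M *v v = 0" using q0 fM by simp
  have "q mod f = 0"
  proof (rule ccontr)
    assume "q mod f \<noteq> 0"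
    then have "degree (q mod f) < CARD('n)" using degree_mod_less'[OF f_nz] degf by simp
    then show False using ev_indep r0 \<open>q mod f \<noteq> 0\<close> by blast
  qed
  then show "f dvd q" by (simp add: mod_eq_0_iff_dvd)
qed

lemma ev_eq_iff: "poly_mat p M *v v = poly_mat q M *v v \<longleftrightarrow> f dvd (p - q)"
  using ev_kernel[of "p - q"] by (simp add: poly_mat_vec_diff)

lemma codeE_gen: "{poly_mat P M *v (poly_mat h M *v v) | P. True} = codeE M v h"
  unfolding codeE_def
  by (auto simp: poly_mat_vec_mult[symmetric] dvd_def) (metis mult.commute)+

lemma codeE_mem:
  assumes "h dvd f"
  shows "poly_mat q M *v v \<in> codeE M v h \<longleftrightarrow> h dvd q"
proof
  assume "poly_mat q M *v v \<in> codeE M v h"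
  then obtain q' where q': "h dvd q'" "poly_mat q M *v v = poly_mat q' M *v v"
    by (auto simp: codeE_def)
  then have "f dvd q - q'" using ev_eq_iff by blast
  then have "h dvd q - q'" using assms dvd_trans by blast
  then show "h dvd q" using q'(1) by (metis diff_add_cancel dvd_add)
qed (auto simp: codeE_def)

lemma codeE_subspace: "vec.subspace (codeE M v h)"
  unfolding vec.subspace_def codeE_def
proof safe
  show "\<exists>q. 0 = poly_mat q M *v v \<and> h dvd q" by (intro exI[of _ 0]) simp
next
  fix q1 q2 assume "h dvd q1" "h dvd q2"
  then show "\<exists>q. poly_mat q1 M *v v + poly_mat q2 M *v v = poly_mat q M *v v \<and> h dvd q"
    by (intro exI[of _ "q1 + q2"]) (simp add: poly_mat_vec_add)
next
  fix c q assume "h dvd q"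
  then show "\<exists>q'. c *s (poly_mat q M *v v) = poly_mat q' M *v v \<and> h dvd q'"
    by (intro exI[of _ "smult c q"]) (simp add: poly_mat_vec_smult dvd_smult)
qed

lemma codeE_invariant: "x \<in> codeE M v h \<Longrightarrow> M *v x \<in> codeE M v h"
proof -
  assume "x \<in> codeE M v h"
  then obtain q where q: "h dvd q" "x = poly_mat q M *v v" by (auto simp: codeE_def)
  have "M *v x = poly_mat ([:0,1:] * q) M *v v"
    by (simp add: q(2) poly_mat_vec_mult poly_mat_vec_pCons)
  moreover have "h dvd [:0,1:] * q" using q(1) by (rule dvd_mult)
  ultimately show ?thesis unfolding codeE_def by (intro CollectI exI[of _ "[:0,1:] * q"] conjI)
qed

end
end

lemma poly_mat_vec_in_invariant:
  fixes M :: "'a::field^'n^'n"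
  assumes S: "vec.subspace S" and inv: "\<forall>x\<in>S. M *v x \<in> S" and x: "x \<in> S"
  shows "poly_mat r M *v x \<in> S"
proof (induction r rule: pCons_induct)
  case 0
  then show ?case using vec.subspace_0[OF S] by simp
next
  case (pCons a p)
  then show ?case
    by (simp add: poly_mat_vec_pCons vec.subspace_add[OF S] vec.subspace_scale[OF S] x inv)
qed

context cyc begin

context
  fixes f :: "'a poly"
  assumes fM: "poly_mat f M = 0" and degf: "degree f = CARD('n)"
begin

lemma invariant_classify:
  assumes S: "vec.subspace S" and inv: "\<forall>x\<in>S. M *v x \<in> S"
  shows "\<exists>h. h dvd f \<and> h \<noteq> 0 \<and> S = codeE M v h"
proof -
  define I where "I = {q. poly_mat q M *v v \<in> S}"
  have mulI: "r * q \<in> I" if "q \<in> I" for r q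
    using that poly_mat_vec_in_invariant[OF S inv] by (simp add: I_def poly_mat_vec_mult)
  have fI: "f \<in> I" using fM vec.subspace_0[OF S] by (simp add: I_def)
  have f0: "f \<noteq> 0" by (rule f_nz[OF fM degf])
  obtain h where h: "h \<in> I \<and> h \<noteq> 0" and hmin: "\<forall>q. q \<in> I \<and> q \<noteq> 0 \<longrightarrow> degree h \<le> degree q"
    using ex_has_least_nat[of "\<lambda>q. q \<in> I \<and> q \<noteq> 0" f degree] fI f0 by blast
  have hdvd: "h dvd q" if q: "q \<in> I" for q
  proof -
    have "q mod h = q - (q div h) * h" by (simp add: minus_div_mult_eq_mod)
    then have "poly_mat (q mod h) M *v v = poly_mat q M *v v - poly_mat (q div h) M *v (poly_mat h M *v v)"
      by (simp add: poly_mat_vec_diff poly_mat_vec_mult)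
    moreover have "poly_mat (q div h) M *v (poly_mat h M *v v) \<in> S"
      using h poly_mat_vec_in_invariant[OF S inv] by (simp add: I_def)
    ultimately have "q mod h \<in> I" using q vec.subspace_diff[OF S] by (simp add: I_def)
    moreover have "\<not> (q mod h \<noteq> 0)"
    proof
      assume "q mod h \<noteq> 0"
      then have "degree (q mod h) < degree h" using degree_mod_less'[of h q] h by simp
      then show False using hmin \<open>q mod h \<in> I\<close> \<open>q mod h \<noteq> 0\<close> by fastforce
    qed
    ultimately show ?thesis by (simp add: mod_eq_0_iff_dvd)
  qed
  have "S = codeE M v h"
  proof
    show "S \<subseteq> codeE M v h"
    proof
      fix x assume "x \<in> S"
      obtain q where q: "x = poly_mat q M *v v" using surj_ev by blast
      then have "q \<in> I" using \<open>x \<in> S\<close> by (simp add: I_def)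
      then show "x \<in> codeE M v h" using hdvd q by (auto simp: codeE_def)
    qed
  next
    show "codeE M v h \<subseteq> S"
    proof
      fix x assume "x \<in> codeE M v h"
      then obtain q where q: "x = poly_mat q M *v v" "h dvd q" by (auto simp: codeE_def)
      then obtain r where "q = r * h" by (metis dvd_def mult.commute)
      then have "q \<in> I" using mulI h by blast
      then show "x \<in> S" using q by (simp add: I_def)
    qed
  qed
  then show ?thesis using hdvd fI h by blast
qed

lemma codeE_dim_le:
  assumes hf: "h dvd f"
  shows "vec.dim (codeE M v h) \<le> CARD('n) - degree h"
proof -
  obtain h2 where f: "f = h * h2" using hf by (auto simp: dvd_def)
  have f0: "f \<noteq> 0" by (rule f_nz[OF fM degf])
  then have h0: "h \<noteq> 0" and h20: "h2 \<noteq> 0" using f by auto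
  have degs: "degree h2 = CARD('n) - degree h" using degree_mult_eq[OF h0 h20] f degf by simp
  let ?y = "poly_mat h M *v v"
  let ?B = "(\<lambda>i. matpow M i *v ?y) ` {..<degree h2}"
  have "codeE M v h \<subseteq> vec.span ?B"
  proof
    fix x assume "x \<in> codeE M v h"
    then obtain r where r: "x = poly_mat (h * r) M *v v"
      by (auto simp: codeE_def dvd_def)
    define r' where "r' = r mod h2"
    have "f dvd (h * r - h * r')"
    proof -
      have "h * r - h * r' = f * (r div h2)"
        unfolding r'_def f by (metis add_diff_cancel_right' div_mult_mod_eq mult.assoc mult.commute right_diff_distrib)
      then show ?thesis by simp
    qed
    then have "x = poly_mat (h * r') M *v v" using r ev_eq_iff[OF fM degf] by blast
    also have "\<dots> = poly_mat r' M *v ?y"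
      by (simp add: poly_mat_vec_mult poly_mat_vec_commute2[of h M r'])
    finally have x: "x = poly_mat r' M *v ?y" .
    show "x \<in> vec.span ?B"
    proof (cases "r' = 0")
      case True
      then show ?thesis using x vec.span_zero by simp
    next
      case False
      then have "degree r' < degree h2" using degree_mod_less'[OF h20] r'_def by simp
      then show ?thesis using x poly_mat_vec_span by blast
    qed
  qed
  then have "vec.dim (codeE M v h) \<le> card ?B" by (intro vec.dim_le_card) auto
  also have "\<dots> \<le> degree h2" using card_image_le[of "{..<degree h2}"] by simp
  finally show ?thesis using degs by simp
qed

lemma codeE_dim:
  assumes hf: "h dvd f"
  shows "vec.dim (codeE M v h) = CARD('n) - degree h"
proof -
  obtain h2 where f: "f = h * h2" using hf by (auto simp: dvd_def)
  have f0: "f \<noteq> 0" by (rule f_nz[OF fM degf])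
  then have h0: "h \<noteq> 0" and h20: "h2 \<noteq> 0" using f by auto
  have degs: "degree h2 = CARD('n) - degree h" "degree h \<le> CARD('n)"
    using degree_mult_eq[OF h0 h20] f degf by simp_all
  let ?Q = "poly_mat h M"
  have rng: "range ((*v) ?Q) = codeE M v h"
  proof
    show "range ((*v) ?Q) \<subseteq> codeE M v h"
    proof
      fix y assume "y \<in> range ((*v) ?Q)"
      then obtain x where y: "y = ?Q *v x" by blast
      obtain q where "x = poly_mat q M *v v" using surj_ev by blast
      then have "y = poly_mat (h * q) M *v v" using y by (simp add: poly_mat_vec_mult)
      then show "y \<in> codeE M v h" by (auto simp: codeE_def)
    qed
  next
    show "codeE M v h \<subseteq> range ((*v) ?Q)"
    proof
      fix y assume "y \<in> codeE M v h"
      then obtain r where "y = poly_mat (h * r) M *v v" by (auto simp: codeE_def dvd_def)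
      then have "y = ?Q *v (poly_mat r M *v v)" by (simp add: poly_mat_vec_mult)
      then show "y \<in> range ((*v) ?Q)" by blast
    qed
  qed
  have ker: "{x. ?Q *v x = 0} = codeE M v h2"
  proof
    show "{x. ?Q *v x = 0} \<subseteq> codeE M v h2"
    proof
      fix x assume "x \<in> {x. ?Q *v x = 0}"
      then have x0: "?Q *v x = 0" by simp
      obtain q where q: "x = poly_mat q M *v v" using surj_ev by blast
      then have "poly_mat (h * q) M *v v = 0" using x0 by (simp add: poly_mat_vec_mult)
      then have "h * h2 dvd h * q" using ev_kernel[OF fM degf] f by simp
      then have "h2 dvd q" using h0 by simp
      then show "x \<in> codeE M v h2" using q by (auto simp: codeE_def)
    qed
  next
    show "codeE M v h2 \<subseteq> {x. ?Q *v x = 0}"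
    proof
      fix x assume "x \<in> codeE M v h2"
      then obtain q where q: "x = poly_mat q M *v v" "h2 dvd q" by (auto simp: codeE_def)
      then have "f dvd h * q" using f by simp
      then have "poly_mat (h * q) M *v v = 0" using ev_kernel[OF fM degf] by simp
      then show "x \<in> {x. ?Q *v x = 0}" using q by (simp add: poly_mat_vec_mult)
    qed
  qed
  have "vec.dim (codeE M v h2) + vec.dim (codeE M v h) = CARD('n)"
    using rank_nullity_mat[of ?Q] unfolding rng ker .
  moreover have "vec.dim (codeE M v h2) \<le> CARD('n) - degree h2"
    by (rule codeE_dim_le) (simp add: f)
  moreover have "vec.dim (codeE M v h) \<le> CARD('n) - degree h"
    by (rule codeE_dim_le[OF hf])
  ultimately show ?thesis using degs by linarith
qed

end
end

lemma cyclic_vector_map: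
  fixes emb :: "'k::field \<Rightarrow> 'l::field" and M :: "'k^'n^'n"
  assumes emb: "field_emb emb" and cv: "cyclic_vector M v"
  shows "cyclic_vector (map_mat emb M) (map_vec emb v)"
proof -
  interpret cyc M v by (rule cyc.intro[OF cv])
  let ?A = "map_mat emb M" and ?w = "map_vec emb v"
  have phi: "matpow ?A i *v ?w = map_vec emb (matpow M i *v v)" for i
    by (simp add: map_mat_vec[OF emb] map_matpow[OF emb])
  have inj: "inj_on (\<lambda>i. matpow ?A i *v ?w) {..<CARD('n)}"
    using inj_phi unfolding inj_on_def phi map_vec_inj[OF emb] by blast
  have sp: "vec.span ((\<lambda>i. matpow ?A i *v ?w) ` {..<CARD('n)}) = UNIV"
  proof -
    have "axis j 1 \<in> vec.span ((\<lambda>i. matpow ?A i *v ?w) ` {..<CARD('n)})" for j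
    proof -
      obtain q where q: "degree q < CARD('n)" "axis j 1 = poly_mat q M *v v" using surj_ev by blast
      have "axis j 1 = map_vec emb (axis j 1)"
        by (simp add: map_vec_def axis_def vec_eq_iff emb_0[OF emb] emb_1[OF emb])
      also have "\<dots> = poly_mat (map_poly emb q) ?A *v ?w"
        by (simp add: q(2) map_poly_mat_vec[OF emb])
      also have "\<dots> \<in> vec.span ((\<lambda>i. matpow ?A i *v ?w) ` {..<CARD('n)})"
        by (rule poly_mat_vec_span) (simp add: degree_map_emb[OF emb] q(1))
      finally show ?thesis .
    qed
    then have "cart_basis \<subseteq> vec.span ((\<lambda>i. matpow ?A i *v ?w) ` {..<CARD('n)})"
      by (auto simp: cart_basis_def)
    then have "vec.span cart_basis \<subseteq> vec.span ((\<lambda>i. matpow ?A i *v ?w) ` {..<CARD('n)})"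
      by (rule vec.span_minimal[OF _ vec.subspace_span])
    then show ?thesis by (simp add: top.extremum_unique)
  qed
  have ind: "vec.independent ((\<lambda>i. matpow ?A i *v ?w) ` {..<CARD('n)})"
  proof -
    have d: "vec.dim (UNIV :: ('l^'n) set) = CARD('n)" by (rule vec_dim_card)
    have "card ((\<lambda>i. matpow ?A i *v ?w) ` {..<CARD('n)}) = vec.dim (UNIV :: ('l^'n) set)"
      unfolding d using card_image[OF inj] by simp
    then show ?thesis
      using vec.card_eq_dim[of "(\<lambda>i. matpow ?A i *v ?w) ` {..<CARD('n)}" UNIV] sp by simp
  qed
  show ?thesis using inj sp ind by (simp add: cyclic_vector_def)
qed

definition cvec :: "('k::field \<Rightarrow> 'l::field) \<Rightarrow> (nat \<Rightarrow> 'l) \<Rightarrow> nat \<Rightarrow> nat \<Rightarrow> 'l^'n \<Rightarrow> 'k^'n" where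
  "cvec emb b m t d = (\<chi> j. coords emb b m (d $ j) t)"

definition SD :: "('k::field \<Rightarrow> 'l::field) \<Rightarrow> (nat \<Rightarrow> 'l) \<Rightarrow> nat \<Rightarrow> ('l^'n) set \<Rightarrow> ('k^'n) set" where
  "SD emb b m D = vec.span (\<Union>d\<in>D. Rsupp emb b m d)"

lemma wtR_SD: "wtR emb b m D = vec.dim (SD emb b m D)"
  by (simp add: wtR_def SD_def)

locale kb =
  fixes emb :: "'k::field \<Rightarrow> 'l::field" and b :: "nat \<Rightarrow> 'l" and m :: nat
  assumes emb: "field_emb emb" and basis: "is_K_basis emb b m"
begin

lemma coords_prop:
  "(\<forall>t\<ge>m. coords emb b m x t = 0) \<and> x = (\<Sum>t<m. emb (coords emb b m x t) * b t)"
proof -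
  have "\<exists>!a. (\<forall>t\<ge>m. a t = 0) \<and> x = (\<Sum>t<m. emb (a t) * b t)"
    using basis by (simp add: is_K_basis_def)
  from theI'[OF this] show ?thesis unfolding coords_def .
qed

lemma coords_repr: "x = (\<Sum>t<m. emb (coords emb b m x t) * b t)"
  using coords_prop by blast

lemma coords_unique:
  assumes "\<forall>t\<ge>m. a t = 0" "x = (\<Sum>t<m. emb (a t) * b t)"
  shows "coords emb b m x = a"
  unfolding coords_def
  by (rule the1_equality) (use basis assms in \<open>auto simp: is_K_basis_def\<close>)

lemma coords_lin:
  assumes fin: "finite J"
  shows "coords emb b m (\<Sum>j\<in>J. y j * emb (c j)) t = (\<Sum>j\<in>J. coords emb b m (y j) t * c j)"
proof -
  define a where "a t = (\<Sum>j\<in>J. coords emb b m (y j) t * c j)" for t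
  have "coords emb b m (\<Sum>j\<in>J. y j * emb (c j)) = a"
  proof (rule coords_unique)
    show "\<forall>t\<ge>m. a t = 0" using coords_prop by (simp add: a_def)
    have "(\<Sum>j\<in>J. y j * emb (c j)) = (\<Sum>j\<in>J. (\<Sum>t<m. emb (coords emb b m (y j) t) * b t) * emb (c j))"
      by (subst coords_repr[of "y _"]) (rule refl)
    also have "\<dots> = (\<Sum>t<m. emb (a t) * b t)"
      by (simp add: a_def emb_sum[OF emb] emb_mult[OF emb] sum_distrib_right sum_distrib_left
            mult_ac sum.swap[of _ J])
    finally show "(\<Sum>j\<in>J. y j * emb (c j)) = (\<Sum>t<m. emb (a t) * b t)" .
  qed
  then show ?thesis by (simp add: a_def)
qed

lemma coords_0: "coords emb b m 0 t = 0"
  using coords_lin[of "{}"] by simp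

lemma cvec_repr: "d = (\<Sum>t<m. b t *s map_vec emb (cvec emb b m t d))"
proof (subst vec_eq_iff, intro allI)
  fix j
  have "d $ j = (\<Sum>t<m. emb (coords emb b m (d $ j) t) * b t)" by (rule coords_repr)
  also have "\<dots> = (\<Sum>t<m. b t *s map_vec emb (cvec emb b m t d)) $ j"
    by (simp add: sum_component map_vec_def cvec_def mult_ac)
  finally show "d $ j = (\<Sum>t<m. b t *s map_vec emb (cvec emb b m t d)) $ j" .
qed

lemma cvec_in_SD: "d \<in> D \<Longrightarrow> t < m \<Longrightarrow> cvec emb b m t d \<in> SD emb b m D"
  unfolding SD_def Rsupp_def
  by (rule vec.span_base, rule UN_I[of d], assumption, rule vec.span_base) (auto simp: cvec_def)

lemma cvec_ge: "t \<ge> m \<Longrightarrow> cvec emb b m t d = 0"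
  using coords_prop by (simp add: cvec_def vec_eq_iff)

lemma D_sub_span_SD: "D \<subseteq> vec.span (map_vec emb ` SD emb b m D)"
proof
  fix d assume d: "d \<in> D"
  have "d = (\<Sum>t<m. b t *s map_vec emb (cvec emb b m t d))" by (rule cvec_repr)
  also have "\<dots> \<in> vec.span (map_vec emb ` SD emb b m D)"
    using d cvec_in_SD by (intro vec.span_sum vec.span_scale vec.span_base) auto
  finally show "d \<in> vec.span (map_vec emb ` SD emb b m D)" .
qed

lemma cvec_in_V:
  assumes V: "vec.subspace V" and y: "y \<in> vec.span (map_vec emb ` V)"
  shows "cvec emb b m s y \<in> V"
proof -
  obtain T r where T: "finite T" "T \<subseteq> map_vec emb ` V" and yT: "y = (\<Sum>a\<in>T. r a *s a)"
    using y unfolding vec.span_explicit by blast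
  have "\<forall>a\<in>T. \<exists>u\<in>V. a = map_vec emb u" using T(2) by blast
  then obtain pre where pre: "\<And>a. a \<in> T \<Longrightarrow> pre a \<in> V \<and> a = map_vec emb (pre a)" by metis
  have "cvec emb b m s y = (\<Sum>a\<in>T. coords emb b m (r a) s *s pre a)"
  proof (subst vec_eq_iff, intro allI)
    fix j
    have "y $ j = (\<Sum>a\<in>T. r a * a $ j)" by (simp add: yT sum_component)
    also have "\<dots> = (\<Sum>a\<in>T. r a * emb (pre a $ j))"
    proof (rule sum.cong[OF refl])
      fix a assume "a \<in> T"
      then have "a = map_vec emb (pre a)" using pre by blast
      then have "a $ j = emb (pre a $ j)" by (metis map_vec_def vec_lambda_beta)
      then show "r a * a $ j = r a * emb (pre a $ j)" by simp
    qed
    finally have "y $ j = (\<Sum>a\<in>T. r a * emb (pre a $ j))" .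
    then have "coords emb b m (y $ j) s = (\<Sum>a\<in>T. coords emb b m (r a) s * pre a $ j)"
      using coords_lin[OF T(1)] by simp
    then show "cvec emb b m s y $ j = (\<Sum>a\<in>T. coords emb b m (r a) s *s pre a) $ j"
      by (simp add: cvec_def sum_component)
  qed
  also have "\<dots> \<in> V" using pre by (intro vec.subspace_sum[OF V] vec.subspace_scale[OF V]) auto
  finally show ?thesis .
qed

lemma SD_least:
  assumes V: "vec.subspace V" and D: "D \<subseteq> vec.span (map_vec emb ` V)"
  shows "SD emb b m D \<subseteq> V"
  unfolding SD_def
proof (rule vec.span_minimal[OF _ V], safe)
  fix d x assume d: "d \<in> D" and x: "x \<in> Rsupp emb b m d"
  have "{cvec emb b m t d | t. t < m} \<subseteq> V" using cvec_in_V[OF V] d D by blast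
  then have "Rsupp emb b m d \<subseteq> V" unfolding Rsupp_def cvec_def[symmetric]
    by (rule vec.span_minimal[OF _ V])
  then show "x \<in> V" using x by blast
qed

lemma SD_subspace: "vec.subspace (SD emb b m D)"
  by (simp add: SD_def)

lemma cvec_mat: "cvec emb b m t (map_mat emb M *v c) = M *v cvec emb b m t c"
proof (subst vec_eq_iff, intro allI)
  fix j
  have "(map_mat emb M *v c) $ j = (\<Sum>k\<in>UNIV. c $ k * emb (M $ j $ k))"
    by (simp add: matrix_vector_mult_def map_mat_def mult_ac)
  then show "cvec emb b m t (map_mat emb M *v c) $ j = (M *v cvec emb b m t c) $ j"
    using coords_lin[of UNIV "\<lambda>k. c $ k" "\<lambda>k. M $ j $ k" t]
    by (simp add: cvec_def matrix_vector_mult_def mult_ac)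
qed

lemma cvec_orth:
  assumes "(\<Sum>j\<in>UNIV. y $ j * emb (x $ j)) = 0"
  shows "(\<Sum>j\<in>UNIV. cvec emb b m t y $ j * x $ j) = 0"
  using coords_lin[of UNIV "\<lambda>j. y $ j" "\<lambda>j. x $ j" t] assms coords_0
  by (simp add: cvec_def)

end

lemma irr_bezout:
  fixes p a :: "'k::field poly"
  assumes irr: "irreducible p" and nd: "\<not> p dvd a"
  shows "\<exists>u v. u * p + v * a = 1"
proof -
  define J where "J = {u * p + v * a | u v. True}"
  have pJ: "p \<in> J" unfolding J_def by (intro CollectI exI[of _ 1] exI[of _ 0]) simp
  have aJ: "a \<in> J" unfolding J_def by (intro CollectI exI[of _ 0] exI[of _ 1]) simp
  have p0: "p \<noteq> 0" using irr by (auto simp: irreducible_def)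
  have Jdiff: "x - y \<in> J" if xy: "x \<in> J" "y \<in> J" for x y
  proof -
    obtain u v u' v' where "x = u * p + v * a" "y = u' * p + v' * a" using xy unfolding J_def by blast
    then have "x - y = (u - u') * p + (v - v') * a" by (simp add: algebra_simps)
    then show ?thesis by (auto simp: J_def)
  qed
  have Jmul: "c * x \<in> J" if xJ: "x \<in> J" for x c
  proof -
    obtain u v where "x = u * p + v * a" using xJ unfolding J_def by blast
    then have "c * x = (c * u) * p + (c * v) * a" by (simp add: algebra_simps)
    then show ?thesis by (auto simp: J_def)
  qed
  obtain d where d: "d \<in> J \<and> d \<noteq> 0" and dmin: "\<forall>q. q \<in> J \<and> q \<noteq> 0 \<longrightarrow> degree d \<le> degree q"
    using ex_has_least_nat[of "\<lambda>q. q \<in> J \<and> q \<noteq> 0" p degree] pJ p0 by blast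
  have ddvd: "d dvd x" if "x \<in> J" for x
  proof -
    have "x mod d = x - (x div d) * d" by (simp add: minus_div_mult_eq_mod)
    then have "x mod d \<in> J" using Jdiff[OF that Jmul[OF conjunct1[OF d]]] by simp
    moreover have "\<not> (x mod d \<noteq> 0)"
    proof
      assume "x mod d \<noteq> 0"
      then have "degree (x mod d) < degree d" using degree_mod_less'[of d x] d by simp
      then show False using dmin \<open>x mod d \<in> J\<close> \<open>x mod d \<noteq> 0\<close> by fastforce
    qed
    ultimately show ?thesis by (simp add: mod_eq_0_iff_dvd)
  qed
  obtain e where pe: "p = d * e" using ddvd[OF pJ] by (auto simp: dvd_def)
  have "is_unit d"
  proof (rule ccontr)
    assume "\<not> is_unit d"
    then have "is_unit e" using irr pe by (auto simp: irreducible_def)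
    then obtain e' where e': "1 = e * e'" by (auto simp: dvd_def)
    have "d = p * e'" using pe e' by (metis mult.assoc mult_1_right)
    then have "p dvd d" by simp
    then have "p dvd a" using ddvd[OF aJ] dvd_trans by blast
    then show False using nd by simp
  qed
  then obtain k where k: "1 = d * k" by (auto simp: dvd_def)
  obtain u v where "d = u * p + v * a" using d by (auto simp: J_def)
  then have "(k * u) * p + (k * v) * a = 1" using k by (simp add: algebra_simps)
  then show ?thesis by blast
qed

lemma irr_prime:
  fixes p :: "'k::field poly"
  assumes irr: "irreducible p"
  shows "prime_elem p"
proof (rule prime_elemI)
  show "p \<noteq> 0" "\<not> p dvd 1" using irr by (auto simp: irreducible_def)
  fix a b assume ab: "p dvd a * b"
  show "p dvd a \<or> p dvd b"
  proof (cases "p dvd a")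
    case True
    then show ?thesis by simp
  next
    case False
    then obtain u v where uv: "u * p + v * a = 1" using irr_bezout[OF irr] by blast
    have "b = (u * p + v * a) * b" using uv by simp
    also have "\<dots> = (u * b) * p + v * (a * b)" by (simp add: algebra_simps)
    finally have bb: "b = (u * b) * p + v * (a * b)" .
    have "p dvd (u * b) * p" by simp
    moreover have "p dvd v * (a * b)" using ab by simp
    ultimately have "p dvd (u * b) * p + v * (a * b)" by (rule dvd_add)
    then have "p dvd b" using bb by simp
    then show ?thesis by simp
  qed
qed

lemma prime_dvd_prod:
  assumes p: "prime_elem p" and fin: "finite S" and d: "p dvd prod f S"
  shows "\<exists>i\<in>S. p dvd f i"
  using fin d
proof (induction S rule: finite_induct)
  case empty
  then show ?case using p by (simp add: prime_elem_def)
next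
  case (insert x F)
  then show ?case using prime_elem_dvd_multD[OF p] by auto
qed

lemma irr_factor_exists:
  fixes e :: "'k::field poly"
  assumes "\<not> is_unit e" "e \<noteq> 0"
  shows "\<exists>p. irreducible p \<and> p dvd e"
  using assms
proof (induction "degree e" arbitrary: e rule: less_induct)
  case less
  show ?case
  proof (cases "irreducible e")
    case True
    then show ?thesis by (intro exI[of _ e]) simp
  next
    case False
    then obtain a c where ac: "e = a * c" "\<not> is_unit a" "\<not> is_unit c"
      using less.prems by (auto simp: irreducible_def)
    then have a0: "a \<noteq> 0" and c0: "c \<noteq> 0" using less.prems by auto
    have "degree c > 0" using ac(3) c0 is_unit_iff_degree by auto
    then have "degree a < degree e" using ac(1) degree_mult_eq[OF a0 c0] by simp
    then obtain p where "irreducible p" "p dvd a" using less.hyps ac(2) a0 by blast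
    then show ?thesis using ac(1) by auto
  qed
qed

lemma irr_dvd_irr:
  fixes p q :: "'k::field poly"
  assumes "irreducible p" "irreducible q" "p dvd q"
  shows "q dvd p"
proof -
  obtain c where c: "q = p * c" using assms(3) by (auto simp: dvd_def)
  have "is_unit c" using assms(1,2) c by (auto simp: irreducible_def)
  then obtain c' where c': "1 = c * c'" by (auto simp: dvd_def)
  have "p = q * c'" using c c' by (metis mult.assoc mult_1_right)
  then show ?thesis by simp
qed

lemma monic_dvd_eq:
  fixes p q :: "'a::field poly"
  assumes "p dvd q" "q dvd p" "lead_coeff p = 1" "lead_coeff q = 1"
  shows "p = q"
proof -
  obtain c where c: "q = p * c" using assms(1) by (auto simp: dvd_def)
  have q0: "q \<noteq> 0" using assms(4) by auto
  have p0: "p \<noteq> 0" using assms(3) by auto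
  have "degree q \<le> degree p" using assms(2) p0 by (simp add: dvd_imp_degree_le)
  then have "degree c = 0" using c degree_mult_eq[OF p0] q0 by (cases "c = 0") auto
  then obtain a where "c = [:a:]" by (metis degree_eq_zeroE)
  then have "q = smult a p" using c by simp
  then have "a \<noteq> 0" using q0 by auto
  then have "a = 1" using assms(3,4) \<open>q = smult a p\<close> by simp
  then show ?thesis using \<open>q = smult a p\<close> by simp
qed

lemma monic_unit_eq_1:
  fixes p :: "'a::field poly"
  assumes "is_unit p" "lead_coeff p = 1"
  shows "p = 1"
  using monic_dvd_eq[of p 1] assms by simp

locale PF =
  fixes emb :: "'k::field \<Rightarrow> 'l::field_gcd"
    and s :: nat and fi :: "nat \<Rightarrow> 'k poly" and mi :: "nat \<Rightarrow> nat"
    and g :: "'l poly" and gi :: "nat \<Rightarrow> 'l poly" and l lp :: "nat \<Rightarrow> nat"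
  assumes emb: "field_emb emb"
    and fi_monic: "\<And>i. i < s \<Longrightarrow> lead_coeff (fi i) = 1"
    and fi_irr: "\<And>i. i < s \<Longrightarrow> irreducible (fi i)"
    and fi_dist: "inj_on fi {..<s}"
    and mi_pos: "\<And>i. i < s \<Longrightarrow> mi i \<ge> 1"
    and g_fact: "g = (\<Prod>i<s. gi i)"
    and gi_monic: "\<And>i. i < s \<Longrightarrow> lead_coeff (gi i) = 1"
    and gi_dvd: "\<And>i. i < s \<Longrightarrow> gi i dvd map_poly emb (fi i) ^ mi i"
    and l_def: "\<And>i. l i = (if gi i = 1 then 0
                  else (LEAST l. l \<in> {1..mi i} \<and> gi i dvd map_poly emb (fi i) ^ l))"
    and lp_def: "\<And>i. lp i = (if gi i = map_poly emb (fi i) ^ mi i then 0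
                  else (LEAST l'. l' \<in> {1..mi i} \<and> map_poly emb (fi i) ^ (mi i - l') dvd gi i))"
begin

abbreviation F :: "nat \<Rightarrow> 'l poly" where "F i \<equiv> map_poly emb (fi i)"

lemma fi_nz: "i < s \<Longrightarrow> fi i \<noteq> 0" using fi_irr by (auto simp: irreducible_def)

lemma F_monic: assumes "i < s" shows "lead_coeff (F i ^ k) = 1"
  using fi_monic[OF assms] by (simp add: lead_coeff_power emb_1[OF emb] map_emb_lead[OF emb] del: coeff_map_emb)

lemma cop_F:
  assumes "i < s" "j < s" "i \<noteq> j"
  shows "coprime (F i) (F j)"
proof -
  have "\<not> fi i dvd fi j"
  proof
    assume d: "fi i dvd fi j"
    then have "fi j dvd fi i" using irr_dvd_irr fi_irr assms by blast
    then have "fi i = fi j" using monic_dvd_eq d fi_monic assms by blast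
    then show False using fi_dist assms by (auto simp: inj_on_def)
  qed
  then obtain u v where "u * fi i + v * fi j = 1" using irr_bezout fi_irr assms(1) by blast
  then show ?thesis by (rule map_emb_coprime[OF emb])
qed

lemma cop_F_g:
  assumes "i < s" "j < s" "i \<noteq> j"
  shows "coprime (F i ^ a) (gi j)"
proof -
  have "coprime (F i ^ a) (F j ^ mi j)" using cop_F[OF assms] by simp
  then show ?thesis by (rule coprime_divisors[OF dvd_refl gi_dvd[OF assms(2)]])
qed

lemma cop_g_F:
  assumes "i < s" "j < s" "i \<noteq> j"
  shows "coprime (gi i) (F j ^ a)"
  using cop_F_g[OF assms(2,1)] assms(3) by (simp add: coprime_commute)

lemma g_split: "i < s \<Longrightarrow> g = gi i * (\<Prod>j\<in>{..<s} - {i}. gi j)"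
  unfolding g_fact by (simp add: prod.remove)

lemma dvd_g_imp_dvd_gi:
  assumes i: "i < s" and d: "F i ^ a dvd g"
  shows "F i ^ a dvd gi i"
proof -
  have "coprime (F i ^ a) (\<Prod>j\<in>{..<s} - {i}. gi j)"
    by (rule prod_coprime_right) (use cop_F_g i in auto)
  then show ?thesis using d g_split[OF i] coprime_dvd_mult_left_iff by metis
qed

lemma lp_ex: "i < s \<Longrightarrow> \<exists>l'. l' \<in> {1..mi i} \<and> F i ^ (mi i - l') dvd gi i"
  using mi_pos by (intro exI[of _ "mi i"]) simp

lemma l_ex: "i < s \<Longrightarrow> \<exists>l'. l' \<in> {1..mi i} \<and> gi i dvd F i ^ l'"
  using mi_pos gi_dvd by (intro exI[of _ "mi i"]) simp

lemma lp_le: "i < s \<Longrightarrow> lp i \<le> mi i"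
proof -
  assume i: "i < s"
  show ?thesis
  proof (cases "gi i = F i ^ mi i")
    case False
    then show ?thesis using LeastI_ex[OF lp_ex[OF i]] lp_def[of i] by simp
  qed (simp add: lp_def)
qed

lemma l_le: "i < s \<Longrightarrow> l i \<le> mi i"
proof -
  assume i: "i < s"
  show ?thesis
  proof (cases "gi i = 1")
    case False
    then show ?thesis using LeastI_ex[OF l_ex[OF i]] l_def[of i] by simp
  qed (simp add: l_def)
qed

lemma lp_prop: "i < s \<Longrightarrow> F i ^ (mi i - lp i) dvd gi i"
proof -
  assume i: "i < s"
  show ?thesis
  proof (cases "gi i = F i ^ mi i")
    case False
    then show ?thesis using LeastI_ex[OF lp_ex[OF i]] lp_def[of i] by simp
  qed (simp add: lp_def)
qed

lemma l_prop: "i < s \<Longrightarrow> gi i dvd F i ^ l i"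
proof -
  assume i: "i < s"
  show ?thesis
  proof (cases "gi i = 1")
    case False
    then show ?thesis using LeastI_ex[OF l_ex[OF i]] l_def[of i] by simp
  qed (simp add: l_def)
qed

lemma lp_max:
  assumes i: "i < s" and lp1: "lp i \<ge> 1"
  shows "\<not> F i ^ (mi i - lp i + 1) dvd gi i"
proof
  assume d: "F i ^ (mi i - lp i + 1) dvd gi i"
  have ne: "gi i \<noteq> F i ^ mi i" using lp1 lp_def[of i] by auto
  then have lpL: "lp i = (LEAST l'. l' \<in> {1..mi i} \<and> F i ^ (mi i - l') dvd gi i)"
    using lp_def[of i] by simp
  have le: "lp i \<le> mi i" by (rule lp_le[OF i])
  show False
  proof (cases "lp i = 1")
    case True
    then have "F i ^ mi i dvd gi i" using d le by simp
    then have "gi i = F i ^ mi i"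
      using monic_dvd_eq gi_dvd[OF i] F_monic[OF i] gi_monic[OF i] by metis
    then show False using ne by simp
  next
    case False
    then have "lp i - 1 \<in> {1..mi i}" using lp1 le by auto
    moreover have "mi i - (lp i - 1) = mi i - lp i + 1" using lp1 le False by auto
    ultimately have "lp i \<le> lp i - 1"
      using d lpL by (metis (mono_tags, lifting) Least_le)
    then show False using lp1 by simp
  qed
qed

lemma l_min:
  assumes i: "i < s" and l1: "l i \<ge> 1"
  shows "\<not> gi i dvd F i ^ (l i - 1)"
proof
  assume d: "gi i dvd F i ^ (l i - 1)"
  have ne: "gi i \<noteq> 1" using l1 l_def[of i] by auto
  then have lL: "l i = (LEAST l. l \<in> {1..mi i} \<and> gi i dvd F i ^ l)"
    using l_def[of i] by simp
  have le: "l i \<le> mi i" by (rule l_le[OF i])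
  show False
  proof (cases "l i = 1")
    case True
    then have "is_unit (gi i)" using d by simp
    then have "gi i = 1" using monic_unit_eq_1 gi_monic[OF i] by blast
    then show False using ne by simp
  next
    case False
    then have "l i - 1 \<in> {1..mi i}" using l1 le by auto
    then have "l i \<le> l i - 1" using d lL by (metis (mono_tags, lifting) Least_le)
    then show False using l1 by simp
  qed
qed

definition hP :: "'k poly" where "hP = (\<Prod>i<s. fi i ^ (mi i - lp i))"
definition RP :: "'k poly" where "RP = (\<Prod>i<s. fi i ^ lp i)"
definition HP :: "'k poly" where "HP = (\<Prod>i<s. fi i ^ l i)"
definition fP :: "'k poly" where "fP = (\<Prod>i<s. fi i ^ mi i)"

lemma f_split: "fP = hP * RP"
proof -
  have "fP = (\<Prod>i<s. fi i ^ (mi i - lp i) * fi i ^ lp i)"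
    unfolding fP_def by (rule prod.cong[OF refl]) (simp add: lp_le power_add[symmetric])
  then show ?thesis by (simp add: hP_def RP_def prod.distrib)
qed

lemma hP_dvd_g: "map_poly emb hP dvd g"
  unfolding hP_def g_fact map_emb_prod[OF emb] map_emb_power[OF emb]
  by (rule prod_dvd_prod) (simp add: lp_prop)

lemma g_dvd_HP: "g dvd map_poly emb HP"
  unfolding HP_def g_fact map_emb_prod[OF emb] map_emb_power[OF emb]
  by (rule prod_dvd_prod) (simp add: l_prop)

lemma HP_dvd_f: "HP dvd fP"
  unfolding HP_def fP_def by (rule prod_dvd_prod) (simp add: l_le le_imp_power_dvd)

lemma deg_prod_pow: "degree (\<Prod>i<s. fi i ^ e i) = (\<Sum>i<s. e i * degree (fi i))"
  by (simp add: degree_prod_eq_sum_degree fi_nz degree_power_eq)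

lemma factor_arg1:
  assumes hh: "h' = hP * e" and eR: "e dvd RP" and dg: "map_poly emb h' dvd g"
  shows "is_unit e"
proof (rule ccontr)
  assume nu: "\<not> is_unit e"
  have "RP \<noteq> 0" unfolding RP_def using fi_nz by simp
  then have e0: "e \<noteq> 0" using eR by auto
  obtain p where p: "irreducible p" "p dvd e" using irr_factor_exists[OF nu e0] by blast
  then have "p dvd RP" using eR dvd_trans by blast
  then obtain i where i: "i < s" "p dvd fi i ^ lp i"
    using prime_dvd_prod[OF irr_prime[OF p(1)]] unfolding RP_def by auto
  have lp1: "lp i \<ge> 1"
  proof (rule ccontr)
    assume "\<not> lp i \<ge> 1"
    then have "lp i = 0" by simp
    then have "is_unit p" using i by simp
    then show False using p(1) by (simp add: irreducible_def)
  qed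
  have "p dvd fi i" using prime_elem_dvd_power[OF irr_prime[OF p(1)] i(2)] .
  then have "fi i dvd p" using irr_dvd_irr p(1) fi_irr i(1) by blast
  then have "fi i dvd e" using p(2) dvd_trans by blast
  then have "hP * fi i dvd h'" using hh by simp
  then have "map_poly emb hP * F i dvd g"
    using dg map_emb_dvd[OF emb] map_emb_mult[OF emb] by (metis dvd_trans)
  moreover have "F i ^ (mi i - lp i) dvd map_poly emb hP"
    unfolding hP_def map_emb_prod[OF emb] map_emb_power[OF emb] using i(1) by (intro dvd_prodI) auto
  ultimately have "F i ^ (mi i - lp i) * F i dvd g" by (meson dvd_trans mult_dvd_mono dvd_refl)
  then have "F i ^ (mi i - lp i + 1) dvd g" by (simp add: mult.commute)
  then have "F i ^ (mi i - lp i + 1) dvd gi i" by (rule dvd_g_imp_dvd_gi[OF i(1)])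
  then show False using lp_max[OF i(1) lp1] by simp
qed

lemma factor_arg2:
  assumes hh: "HP = h2 * e" and dg: "g dvd map_poly emb h2"
  shows "is_unit e"
proof (rule ccontr)
  assume nu: "\<not> is_unit e"
  have "HP \<noteq> 0" unfolding HP_def using fi_nz by simp
  then have e0: "e \<noteq> 0" using hh by auto
  obtain p where p: "irreducible p" "p dvd e" using irr_factor_exists[OF nu e0] by blast
  then have "p dvd HP" using hh by simp
  then obtain i where i: "i < s" "p dvd fi i ^ l i"
    using prime_dvd_prod[OF irr_prime[OF p(1)]] unfolding HP_def by auto
  have l1: "l i \<ge> 1"
  proof (rule ccontr)
    assume "\<not> l i \<ge> 1"
    then have "l i = 0" by simp
    then have "is_unit p" using i by simp
    then show False using p(1) by (simp add: irreducible_def)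
  qed
  have "p dvd fi i" using prime_elem_dvd_power[OF irr_prime[OF p(1)] i(2)] .
  then have "fi i dvd p" using irr_dvd_irr p(1) fi_irr i(1) by blast
  then have "fi i dvd e" using p(2) dvd_trans by blast
  then obtain e' where e': "e = fi i * e'" by (auto simp: dvd_def)
  define H' where "H' = fi i ^ (l i - 1) * (\<Prod>j\<in>{..<s} - {i}. fi j ^ l j)"
  have "HP = fi i ^ l i * (\<Prod>j\<in>{..<s} - {i}. fi j ^ l j)"
    unfolding HP_def using i(1) by (simp add: prod.remove)
  also have "\<dots> = fi i * H'"
    unfolding H'_def using l1 by (metis (no_types, lifting) Suc_diff_le diff_Suc_1 mult.assoc power_Suc)
  finally have "fi i * (h2 * e') = fi i * H'" using hh e' by (simp add: mult_ac)
  then have "h2 * e' = H'" using fi_nz[OF i(1)] by simp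
  then have "h2 dvd H'" by (metis dvd_triv_left)
  then have "g dvd map_poly emb H'" using dg map_emb_dvd[OF emb] dvd_trans by blast
  then have "gi i dvd map_poly emb H'" using g_split[OF i(1)] by (metis dvd_mult_left)
  then have d: "gi i dvd F i ^ (l i - 1) * (\<Prod>j\<in>{..<s} - {i}. F j ^ l j)"
    unfolding H'_def map_emb_mult[OF emb] map_emb_prod[OF emb] map_emb_power[OF emb] .
  have "coprime (gi i) (\<Prod>j\<in>{..<s} - {i}. F j ^ l j)"
    by (rule prod_coprime_right) (use cop_g_F i in auto)
  then have "gi i dvd F i ^ (l i - 1)" using d coprime_dvd_mult_left_iff by blast
  then show False using l_min[OF i(1) l1] by simp
qed

lemma sum_lp: "(\<Sum>i<s. lp i * degree (fi i)) =
    (\<Sum>i\<in>{i. i < s \<and> gi i \<noteq> map_poly emb (fi i) ^ mi i}. lp i * degree (fi i))"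
  by (rule sum.mono_neutral_right) (auto simp: lp_def)

lemma sum_l: "(\<Sum>i<s. l i * degree (fi i)) =
    (\<Sum>i\<in>{i. i < s \<and> gcd g (map_poly emb (fi i)) \<noteq> 1}. l i * degree (fi i))"
proof (rule sum.mono_neutral_right)
  show "\<forall>i\<in>{..<s} - {i. i < s \<and> gcd g (map_poly emb (fi i)) \<noteq> 1}. l i * degree (fi i) = 0"
  proof
    fix i assume "i \<in> {..<s} - {i. i < s \<and> gcd g (map_poly emb (fi i)) \<noteq> 1}"
    then have i: "i < s" and gc: "gcd g (F i) = 1" by auto
    have "gi i dvd g" using g_split[OF i] by simp
    then have "coprime (gi i) (F i)" using gc coprime_iff_gcd_eq_1 coprime_imp_coprime
      by (metis dvd_refl gcd_dvd1 gcd_dvd2 coprime_divisors)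
    then have "coprime (gi i) (F i ^ mi i)" by simp
    then have "is_unit (gi i)" using gi_dvd[OF i] coprime_common_divisor dvd_refl by blast
    then have "gi i = 1" using monic_unit_eq_1 gi_monic[OF i] by blast
    then show "l i * degree (fi i) = 0" by (simp add: l_def)
  qed
qed auto

end

locale T4 = PF emb s fi mi g gi l lp
  for emb :: "'k::field \<Rightarrow> 'l::field_gcd"
    and s :: nat and fi :: "nat \<Rightarrow> 'k poly" and mi :: "nat \<Rightarrow> nat"
    and g :: "'l poly" and gi :: "nat \<Rightarrow> 'l poly" and l lp :: "nat \<Rightarrow> nat" +
  fixes b :: "nat \<Rightarrow> 'l" and m :: nat
    and M :: "'k^'n^'n" and v :: "'k^'n"
    and f :: "'k poly" and C :: "('l^'n) set" and k :: nat
  assumes basis: "is_K_basis emb b m"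
    and minpoly: "is_min_poly M f"
    and f_fact: "f = (\<Prod>i<s. fi i ^ mi i)"
    and code: "M_cyclic_code emb M C"
    and v: "cyclic_vector M v"
    and g_dvd: "g dvd map_poly emb f"
    and Cg: "C = code_of_gen emb M v g"
    and dimC: "vec.dim C = k"
begin

sublocale kb emb b m by (rule kb.intro[OF emb basis])
sublocale K: cyc M v by (rule cyc.intro[OF v])

abbreviation "A \<equiv> map_mat emb M"
abbreviation "w \<equiv> map_vec emb v"
abbreviation "Fp \<equiv> map_poly emb f"

lemma cvL: "cyclic_vector A w" by (rule cyclic_vector_map[OF emb v])

sublocale L: cyc A w by (rule cyc.intro[OF cvL])

lemma fM: "poly_mat f M = 0" using minpoly by (simp add: is_min_poly_def)
lemma degf: "degree f = CARD('n)" by (rule K.degree_min_poly[OF minpoly])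
lemma FA: "poly_mat Fp A = 0"
  using map_poly_mat[OF emb, of f M] fM by (simp add: map_mat_def emb_0[OF emb] vec_eq_iff)
lemma degF: "degree Fp = CARD('n)" using degf by (simp add: degree_map_emb[OF emb])
lemma f_eq: "f = fP" by (simp add: f_fact fP_def)

lemma C_eq: "C = codeE A w g"
  using Cg L.codeE_gen[OF FA degF, of g] unfolding code_of_gen_def by simp

lemma Csub: "vec.subspace C" unfolding C_eq by (rule L.codeE_subspace[OF FA degF])

lemma Cinv: "c \<in> C \<Longrightarrow> A *v c \<in> C"
  using code by (simp add: M_cyclic_code_def)

lemma ev_map: "map_vec emb (poly_mat q M *v v) = poly_mat (map_poly emb q) A *v w"
  by (rule map_poly_mat_vec[OF emb])

lemma emb_codeE: "map_vec emb ` codeE M v h \<subseteq> codeE A w (map_poly emb h)"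
  by (auto simp: codeE_def ev_map intro: map_emb_dvd[OF emb])

lemma Mr_self:
  assumes "vec.subspace D0" "vec.dim D0 = r"
  shows "Mr emb b m r D0 = wtR emb b m D0"
proof -
  have "{D. vec.subspace D \<and> D \<subseteq> D0 \<and> vec.dim D = r} = {D0}"
  proof (intro set_eqI iffI)
    fix D assume "D \<in> {D. vec.subspace D \<and> D \<subseteq> D0 \<and> vec.dim D = r}"
    then show "D \<in> {D0}" using vec.subspace_dim_equal[of D D0] assms by auto
  next
    fix D assume "D \<in> {D0}"
    then show "D \<in> {D. vec.subspace D \<and> D \<subseteq> D0 \<and> vec.dim D = r}" using assms by auto
  qed
  then show ?thesis by (simp add: Mr_def)
qed

end

context T4 begin

lemma SD_inv:
  assumes Dsub: "\<And>c. c \<in> D \<Longrightarrow> A *v c \<in> D"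
  shows "\<forall>x\<in>SD emb b m D. M *v x \<in> SD emb b m D"
proof -
  let ?S = "SD emb b m D"
  have sub: "vec.subspace ((*v) M -` ?S)" by (rule vec.subspace_vimage[OF SD_subspace])
  have "(\<Union>d\<in>D. Rsupp emb b m d) \<subseteq> (*v) M -` ?S"
  proof (rule UN_least)
    fix d assume d: "d \<in> D"
    have "{cvec emb b m t d | t. t < m} \<subseteq> (*v) M -` ?S"
    proof safe
      fix t assume "t < m"
      then have "cvec emb b m t (A *v d) \<in> ?S" using cvec_in_SD Dsub[OF d] by blast
      then show "cvec emb b m t d \<in> (*v) M -` ?S" by (simp add: cvec_mat)
    qed
    then show "Rsupp emb b m d \<subseteq> (*v) M -` ?S"
      unfolding Rsupp_def cvec_def[symmetric] by (rule vec.span_minimal[OF _ sub])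
  qed
  then have "vec.span (\<Union>d\<in>D. Rsupp emb b m d) \<subseteq> (*v) M -` ?S" by (rule vec.span_minimal[OF _ sub])
  then have "?S \<subseteq> (*v) M -` ?S" by (simp only: SD_def[symmetric])
  then show ?thesis by blast
qed

lemma part1: "wtR emb b m C = (\<Sum>i<s. lp i * degree (fi i))"
proof -
  define S where "S = SD emb b m C"
  have Ssub: "vec.subspace S" by (simp add: S_def SD_subspace)
  have Sinv: "\<forall>x\<in>S. M *v x \<in> S" unfolding S_def by (rule SD_inv[OF Cinv])
  obtain h' where h': "h' dvd f" "h' \<noteq> 0" "S = codeE M v h'"
    using K.invariant_classify[OF fM degf Ssub Sinv] by blast
  have hP_f: "hP dvd f" using f_eq f_split by simp
  have S_sub_h: "S \<subseteq> codeE M v hP"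
    unfolding S_def
  proof (rule SD_least[OF K.codeE_subspace[OF fM degf]])
    show "C \<subseteq> vec.span (map_vec emb ` codeE M v hP)"
    proof
      fix c assume "c \<in> C"
      then obtain q where q: "c = poly_mat q A *v w" "g dvd q" unfolding C_eq codeE_def by blast
      then have "map_poly emb hP dvd q" using hP_dvd_g dvd_trans by blast
      then obtain r where r: "q = map_poly emb hP * r" by (auto simp: dvd_def)
      let ?y = "map_vec emb (poly_mat hP M *v v)"
      have c: "c = poly_mat r A *v ?y"
        by (simp add: q(1) r ev_map poly_mat_vec_mult poly_mat_vec_commute2[of "map_poly emb hP" A r])
      have "c \<in> vec.span ((\<lambda>i. matpow A i *v ?y) ` {..<Suc (degree r)})"
        unfolding c by (rule poly_mat_vec_span) simp
      moreover have "(\<lambda>i. matpow A i *v ?y) ` {..<Suc (degree r)} \<subseteq> map_vec emb ` codeE M v hP"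
      proof safe
        fix i
        have "matpow A i *v ?y = map_vec emb (matpow M i *v (poly_mat hP M *v v))"
          by (simp add: map_mat_vec[OF emb] map_matpow[OF emb])
        moreover have "matpow M i *v (poly_mat hP M *v v) = poly_mat (monom 1 i * hP) M *v v"
          by (simp add: poly_mat_vec_mult poly_mat_vec_monom)
        moreover have "poly_mat (monom 1 i * hP) M *v v \<in> codeE M v hP"
          unfolding codeE_def by auto
        ultimately show "matpow A i *v ?y \<in> map_vec emb ` codeE M v hP" by auto
      qed
      ultimately show "c \<in> vec.span (map_vec emb ` codeE M v hP)"
        using vec.span_mono by blast
    qed
  qed
  have "poly_mat h' M *v v \<in> S" using h'(3) by (auto simp: codeE_def)
  then have "hP dvd h'" using S_sub_h K.codeE_mem[OF fM degf hP_f] by blast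
  then obtain e where e: "h' = hP * e" by (auto simp: dvd_def)
  have hP0: "hP \<noteq> 0" using h'(2) e by auto
  have "hP * e dvd hP * RP" using h'(1) e f_eq f_split by simp
  then have eR: "e dvd RP" using hP0 by simp
  have "map_poly emb h' dvd g"
  proof -
    have gC: "poly_mat g A *v w \<in> C" unfolding C_eq codeE_def by auto
    have "map_vec emb ` S \<subseteq> codeE A w (map_poly emb h')" using h'(3) emb_codeE by simp
    then have "vec.span (map_vec emb ` S) \<subseteq> codeE A w (map_poly emb h')"
      by (rule vec.span_minimal[OF _ L.codeE_subspace[OF FA degF]])
    then have "poly_mat g A *v w \<in> codeE A w (map_poly emb h')"
      using gC D_sub_span_SD[of C] unfolding S_def by blast
    moreover have "map_poly emb h' dvd Fp" using h'(1) by (rule map_emb_dvd[OF emb])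
    ultimately show ?thesis using L.codeE_mem[OF FA degF] by blast
  qed
  then have "is_unit e" using factor_arg1[OF e eR] by blast
  then have "degree e = 0" using is_unit_iff_degree by (metis is_unit_iff_degree not_is_unit_0)
  then have dh: "degree h' = degree hP" using e h'(2) by (simp add: degree_mult_eq hP0)
  have "vec.dim S = CARD('n) - degree h'" unfolding h'(3) by (rule K.codeE_dim[OF fM degf h'(1)])
  also have "\<dots> = degree f - degree hP" using degf dh by simp
  also have "\<dots> = (\<Sum>i<s. mi i * degree (fi i)) - (\<Sum>i<s. (mi i - lp i) * degree (fi i))"
    unfolding f_eq fP_def hP_def deg_prod_pow ..
  also have "\<dots> = (\<Sum>i<s. lp i * degree (fi i))"
  proof -
    have "(\<Sum>i<s. mi i * degree (fi i)) = (\<Sum>i<s. (mi i - lp i) * degree (fi i)) + (\<Sum>i<s. lp i * degree (fi i))"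
      by (simp add: sum.distrib[symmetric] lp_le add_mult_distrib[symmetric])
    then show ?thesis by simp
  qed
  finally show ?thesis by (simp add: wtR_SD S_def)
qed

end

context T4 begin

lemma part2: "wtR emb b m (dual_code C) = (\<Sum>i<s. l i * degree (fi i))"
proof -
  define W where "W = {x. map_vec emb x \<in> C}"
  have Wsub: "vec.subspace W"
    unfolding vec.subspace_def W_def
    using vec.subspace_0[OF Csub] vec.subspace_add[OF Csub] vec.subspace_scale[OF Csub]
    by (auto simp: map_vec_0[OF emb] map_vec_add[OF emb] map_vec_scale[OF emb])
  have Winv: "\<forall>x\<in>W. M *v x \<in> W"
    unfolding W_def using Cinv by (simp add: map_mat_vec[OF emb])
  obtain h2 where h2: "h2 dvd f" "h2 \<noteq> 0" "W = codeE M v h2"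
    using K.invariant_classify[OF fM degf Wsub Winv] by blast
  have HP_f: "HP dvd f" using f_eq HP_dvd_f by simp
  have "codeE M v HP \<subseteq> W"
  proof
    fix x assume "x \<in> codeE M v HP"
    then obtain q where q: "x = poly_mat q M *v v" "HP dvd q" by (auto simp: codeE_def)
    have "g dvd map_poly emb q" using g_dvd_HP map_emb_dvd[OF emb q(2)] dvd_trans by blast
    then show "x \<in> W" unfolding W_def C_eq codeE_def using q(1) ev_map by auto
  qed
  moreover have "poly_mat HP M *v v \<in> codeE M v HP" by (auto simp: codeE_def)
  ultimately have "poly_mat HP M *v v \<in> codeE M v h2" using h2(3) by blast
  then have "h2 dvd HP" using K.codeE_mem[OF fM degf h2(1)] by blast
  then obtain e where e: "HP = h2 * e" by (auto simp: dvd_def)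
  have "poly_mat h2 M *v v \<in> W" using h2(3) by (auto simp: codeE_def)
  then have "map_vec emb (poly_mat h2 M *v v) \<in> codeE A w g" unfolding W_def C_eq by simp
  then have "poly_mat (map_poly emb h2) A *v w \<in> codeE A w g" by (simp only: ev_map)
  then have gh2: "g dvd map_poly emb h2" using L.codeE_mem[OF FA degF g_dvd] by blast
  have ue: "is_unit e" by (rule factor_arg2[OF e gh2])
  then have e0: "e \<noteq> 0" by auto
  then have "degree e = 0" using ue is_unit_iff_degree by blast
  then have dh: "degree h2 = degree HP" using e h2(2) e0 by (simp add: degree_mult_eq)
  have dimW: "vec.dim W = CARD('n) - degree HP"
    unfolding h2(3) using K.codeE_dim[OF fM degf h2(1)] dh by simp
  have degHP: "degree HP \<le> CARD('n)"
    using dvd_imp_degree_le[OF HP_f] K.f_nz[OF fM degf] degf by simp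
  define S' where "S' = SD emb b m (dual_code C)"
  have S'sub: "vec.subspace S'" by (simp add: S'_def SD_subspace)
  have "S' \<subseteq> dual_code W"
    unfolding S'_def
  proof (rule SD_least[OF subspace_dual])
    show "dual_code C \<subseteq> vec.span (map_vec emb ` dual_code W)"
    proof
      fix y assume y: "y \<in> dual_code C"
      have "cvec emb b m t y \<in> dual_code W" for t
      proof -
        have "(\<Sum>j\<in>UNIV. cvec emb b m t y $ j * x $ j) = 0" if x: "x \<in> W" for x
        proof (rule cvec_orth)
          have "map_vec emb x \<in> C" using x by (simp add: W_def)
          then have "(\<Sum>j\<in>UNIV. y $ j * map_vec emb x $ j) = 0"
            using y unfolding dual_code_def by blast
          then show "(\<Sum>j\<in>UNIV. y $ j * emb (x $ j)) = 0" by (simp add: map_vec_def)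
        qed
        then show ?thesis by (simp add: dual_code_def)
      qed
      then show "y \<in> vec.span (map_vec emb ` dual_code W)"
        by (subst cvec_repr[of y]) (intro vec.span_sum vec.span_scale vec.span_base imageI)
    qed
  qed
  moreover have "dual_code W \<subseteq> S'"
  proof -
    have "dual_code S' \<subseteq> W"
    proof
      fix x assume x: "x \<in> dual_code S'"
      let ?T = "{y. (\<Sum>j\<in>UNIV. map_vec emb x $ j * y $ j) = 0}"
      have Tsub: "vec.subspace ?T"
        unfolding vec.subspace_def
        by (auto simp: sum.distrib algebra_simps sum_distrib_left[symmetric])
      have "map_vec emb ` S' \<subseteq> ?T"
      proof safe
        fix u assume u: "u \<in> S'"
        have "(\<Sum>j\<in>UNIV. x $ j * u $ j) = 0" using x u by (simp add: dual_code_def)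
        then have "emb (\<Sum>j\<in>UNIV. x $ j * u $ j) = 0" by (simp add: emb_0[OF emb])
        then show "(\<Sum>j\<in>UNIV. map_vec emb x $ j * map_vec emb u $ j) = 0"
          by (simp add: map_vec_def emb_sum[OF emb] emb_mult[OF emb])
      qed
      then have "vec.span (map_vec emb ` S') \<subseteq> ?T" by (rule vec.span_minimal[OF _ Tsub])
      then have "dual_code C \<subseteq> ?T" using D_sub_span_SD[of "dual_code C"] unfolding S'_def by blast
      then have "map_vec emb x \<in> dual_code (dual_code C)" by (auto simp: dual_code_def)
      then show "x \<in> W" using dual_dual[OF Csub] by (simp add: W_def)
    qed
    then have "dual_code W \<subseteq> dual_code (dual_code S')" by (auto simp: dual_code_def)
    then show ?thesis using dual_dual[OF S'sub] by simp
  qed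
  ultimately have "S' = dual_code W" by blast
  then have "vec.dim S' = CARD('n) - vec.dim W" using dim_dual[OF Wsub] by simp
  also have "\<dots> = degree HP" using dimW degHP by simp
  also have "\<dots> = (\<Sum>i<s. l i * degree (fi i))" unfolding HP_def deg_prod_pow ..
  finally show ?thesis by (simp add: wtR_SD S'_def)
qed

end

theorem theorem4:
  fixes emb :: "'k::field \<Rightarrow> 'l::field_gcd"
    and b :: "nat \<Rightarrow> 'l" and m :: nat
    and M :: "'k^'n^'n" and v :: "'k^'n"
    and f :: "'k poly" and s :: nat and fi :: "nat \<Rightarrow> 'k poly" and mi :: "nat \<Rightarrow> nat"
    and C :: "('l^'n) set" and k :: nat
    and g :: "'l poly" and gi :: "nat \<Rightarrow> 'l poly"
    and l lp :: "nat \<Rightarrow> nat"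
  assumes emb: "field_emb emb"
    and basis: "is_K_basis emb b m" and deg: "m \<ge> CARD('n)"
    and cyc: "cyclic_matrix M"
    and minpoly: "is_min_poly M f"
    and f_fact: "f = (\<Prod>i<s. fi i ^ mi i)"
    and fi_monic: "\<And>i. i < s \<Longrightarrow> lead_coeff (fi i) = 1"
    and fi_irr: "\<And>i. i < s \<Longrightarrow> irreducible (fi i)"
    and fi_dist: "inj_on fi {..<s}"
    and mi_pos: "\<And>i. i < s \<Longrightarrow> mi i \<ge> 1"
    and code: "M_cyclic_code emb M C"
    and v: "cyclic_vector M v"
    and g_monic: "lead_coeff g = 1" and g_dvd: "g dvd map_poly emb f"
    and Cg: "C = code_of_gen emb M v g"
    and dimC: "vec.dim C = k"
    and g_fact: "g = (\<Prod>i<s. gi i)"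
    and gi_monic: "\<And>i. i < s \<Longrightarrow> lead_coeff (gi i) = 1"
    and gi_dvd: "\<And>i. i < s \<Longrightarrow> gi i dvd map_poly emb (fi i) ^ mi i"
    and l_def: "\<And>i. l i = (if gi i = 1 then 0
                  else (LEAST l. l \<in> {1..mi i} \<and> gi i dvd map_poly emb (fi i) ^ l))"
    and lp_def: "\<And>i. lp i = (if gi i = map_poly emb (fi i) ^ mi i then 0
                  else (LEAST l'. l' \<in> {1..mi i} \<and> map_poly emb (fi i) ^ (mi i - l') dvd gi i))"
  shows "(k \<ge> 1 \<longrightarrow>
            Mr emb b m k C = (\<Sum>i<s. lp i * degree (fi i)) \<and>
            (\<Sum>i<s. lp i * degree (fi i)) =
              (\<Sum>i\<in>{i. i < s \<and> gi i \<noteq> map_poly emb (fi i) ^ mi i}. lp i * degree (fi i)))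
       \<and> (k \<le> CARD('n) - 1 \<longrightarrow>
            Mr emb b m (CARD('n) - k) (dual_code C) = (\<Sum>i<s. l i * degree (fi i)) \<and>
            (\<Sum>i<s. l i * degree (fi i)) =
              (\<Sum>i\<in>{i. i < s \<and> gcd g (map_poly emb (fi i)) \<noteq> 1}. l i * degree (fi i)))"
proof -
  have T: "T4 emb s fi mi g gi l lp b m M v f C k"
    unfolding T4_def PF_def T4_axioms_def
    using emb fi_monic fi_irr fi_dist mi_pos g_fact gi_monic gi_dvd l_def lp_def
      basis minpoly f_fact code v g_dvd Cg dimC by blast
  interpret T: T4 emb s fi mi g gi l lp b m M v f C k by (rule T)
  have c1: "Mr emb b m k C = (\<Sum>i<s. lp i * degree (fi i))"
    using T.Mr_self[OF T.Csub dimC] T.part1 by simp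
  have dd: "vec.dim (dual_code C) = CARD('n) - k" using dim_dual[OF T.Csub] dimC by simp
  have c2: "Mr emb b m (CARD('n) - k) (dual_code C) = (\<Sum>i<s. l i * degree (fi i))"
    using T.Mr_self[OF subspace_dual dd] T.part2 by simp
  show ?thesis using c1 c2 T.sum_lp T.sum_l by simp
qed

end
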